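(* Let $X\subseteq\{0,1\}^n$ and let $f:X\rightarrow\{0,1\}$ be any (partial or total) Boolean function. Then $$UQ(f)=\left\lceil \frac{UC(f)}{2}\right\rceil=\left\lceil \frac{udeg(f)}{2}\right\rceil .$$
   Context: Query model: the input $x\in X$ is accessible only through queries. A classical randomized query algorithm adaptively queries bits $x_i$ (each query costs one) and outputs a bit. A quantum query algorithm starts in a fixed state, alternates input-independent unitaries with applications of the oracle $O_x:|i,b,z\rangle\mapsto|i,b\oplus x_i,z\rangle$, and ends with a measurement giving an output bit; its cost is the number of oracle applications. $UQ(f)$ (resp. $UC(f)$) is the minimum number of queries of a quantum (resp. classical randomized) algorithm that, for every $x\in X$, outputs $f(x)$ with probability strictly greater than $1/2$. A real multilinear polynomial $q:\{0,1\}^n\rightarrow[0,1]$ is an unbounded error polynomial for $f$ if $q(x)>1/2$ whenever $x\in X$ and $f(x)=1$, and $q(x)<1/2$ whenever $x\in X$ and $f(x)=0$; $udeg(f)$ is the minimum degree of such a polynomial. *)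

theory Defs
  imports "HOL-Probability.Probability_Mass_Function" "Jordan_Normal_Form.Matrix"
begin

text \<open>A partial Boolean function f : X -> {0,1} is a predicate on lists together with
  its domain X (a subset of the cube); only the values on X matter.\<close>

definition cube :: "nat \<Rightarrow> bool list set" where
  "cube n = {x. length x = n}"

definition bit :: "bool \<Rightarrow> real" where
  "bit b = (if b then 1 else 0)"

definition mpoly_eval :: "nat \<Rightarrow> (nat set \<Rightarrow> real) \<Rightarrow> bool list \<Rightarrow> real" where
  "mpoly_eval n c x = (\<Sum>S\<in>Pow {0..<n}. c S * (\<Prod>i\<in>S. bit (x ! i)))"

definition mpoly_deg_le :: "nat \<Rightarrow> (nat set \<Rightarrow> real) \<Rightarrow> nat \<Rightarrow> bool" where
  "mpoly_deg_le n c d \<longleftrightarrow> (\<forall>S\<in>Pow {0..<n}. c S \<noteq> 0 \<longrightarrow> card S \<le> d)"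

definition unbounded_poly :: "nat \<Rightarrow> bool list set \<Rightarrow> (bool list \<Rightarrow> bool) \<Rightarrow> (nat set \<Rightarrow> real) \<Rightarrow> bool" where
  "unbounded_poly n X f c \<longleftrightarrow>
     (\<forall>x\<in>cube n. 0 \<le> mpoly_eval n c x \<and> mpoly_eval n c x \<le> 1) \<and>
     (\<forall>x\<in>X. (f x \<longrightarrow> mpoly_eval n c x > 1/2) \<and> (\<not> f x \<longrightarrow> mpoly_eval n c x < 1/2))"

definition udeg :: "nat \<Rightarrow> bool list set \<Rightarrow> (bool list \<Rightarrow> bool) \<Rightarrow> nat" where
  "udeg n X f = (LEAST d. \<exists>c. unbounded_poly n X f c \<and> mpoly_deg_le n c d)"

text \<open>Deterministic decision trees: Query i t0 t1 queries bit x_i and continues with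
  t0 if x_i = 0, with t1 if x_i = 1. A randomized query algorithm is a probability
  distribution over deterministic decision trees; its cost is the maximal number of
  queries made on any run, i.e. the maximal depth of a tree in its support.\<close>

datatype dtree = Leaf bool | Query nat dtree dtree

fun dt_eval :: "dtree \<Rightarrow> bool list \<Rightarrow> bool" where
  "dt_eval (Leaf b) x = b"
| "dt_eval (Query i t0 t1) x = (if x ! i then dt_eval t1 x else dt_eval t0 x)"

fun dt_depth :: "dtree \<Rightarrow> nat" where
  "dt_depth (Leaf b) = 0"
| "dt_depth (Query i t0 t1) = Suc (max (dt_depth t0) (dt_depth t1))"

fun dt_valid :: "nat \<Rightarrow> dtree \<Rightarrow> bool" where
  "dt_valid n (Leaf b) = True"
| "dt_valid n (Query i t0 t1) = (i < n \<and> dt_valid n t0 \<and> dt_valid n t1)"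

definition rand_alg_computes ::
  "nat \<Rightarrow> bool list set \<Rightarrow> (bool list \<Rightarrow> bool) \<Rightarrow> nat \<Rightarrow> dtree pmf \<Rightarrow> bool" where
  "rand_alg_computes n X f k P \<longleftrightarrow>
     (\<forall>t\<in>set_pmf P. dt_valid n t \<and> dt_depth t \<le> k) \<and>
     (\<forall>x\<in>X. measure_pmf.prob P {t. dt_eval t x = f x} > 1/2)"

definition UC :: "nat \<Rightarrow> bool list set \<Rightarrow> (bool list \<Rightarrow> bool) \<Rightarrow> nat" where
  "UC n X f = (LEAST k. \<exists>P. rand_alg_computes n X f k P)"

text \<open>State space: basis states |i,b,z> with i < n, b in {0,1}, z < m (workspace of
  dimension m >= 1), encoded as the index (2*i + b)*m + z in {0..<2*n*m}.\<close>

definition qdim :: "nat \<Rightarrow> nat \<Rightarrow> nat" where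
  "qdim n m = 2 * n * m"

definition qidx :: "nat \<Rightarrow> nat \<Rightarrow> bool \<Rightarrow> nat \<Rightarrow> nat" where
  "qidx m i b z = (2 * i + (if b then 1 else 0)) * m + z"

text \<open>The query_op O_x : |i,b,z> -> |i, b xor x_i, z>, as a permutation matrix.\<close>

definition query_op :: "nat \<Rightarrow> nat \<Rightarrow> bool list \<Rightarrow> complex mat" where
  "query_op n m x = mat (qdim n m) (qdim n m) (\<lambda>(r, c).
     if (\<exists>i<n. \<exists>b z. z < m \<and> c = qidx m i b z \<and> r = qidx m i (b \<noteq> x ! i) z) then 1 else 0)"

definition adjoint :: "complex mat \<Rightarrow> complex mat" where
  "adjoint U = mat (dim_col U) (dim_row U) (\<lambda>(i, j). cnj (U $$ (j, i)))"

definition unitary :: "nat \<Rightarrow> complex mat \<Rightarrow> bool" where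
  "unitary d U \<longleftrightarrow> U \<in> carrier_mat d d \<and> adjoint U * U = 1\<^sub>m d"

text \<open>Final state U_T O_x U_{T-1} ... O_x U_0 |0>, for unitaries Us = [U_0, ..., U_T].\<close>

fun qrun :: "complex mat \<Rightarrow> complex mat list \<Rightarrow> complex vec \<Rightarrow> complex vec" where
  "qrun Ox [] v = v"
| "qrun Ox [U] v = U *\<^sub>v v"
| "qrun Ox (U # V # Us) v = qrun Ox (V # Us) (Ox *\<^sub>v (U *\<^sub>v v))"

text \<open>Final measurement: measure in the computational basis and output 1 iff the
  outcome lies in the set Acc (a general projective measurement can be reduced to
  this by absorbing a basis change into U_T).\<close>

definition accept_prob :: "nat \<Rightarrow> nat \<Rightarrow> bool list \<Rightarrow> complex mat list \<Rightarrow> nat set \<Rightarrow> real" where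
  "accept_prob n m x Us Acc =
     (let \<psi> = qrun (query_op n m x) Us (unit_vec (qdim n m) 0)
      in \<Sum>j\<in>Acc \<inter> {0..<qdim n m}. (cmod (\<psi> $ j))\<^sup>2)"

definition quantum_alg_computes ::
  "nat \<Rightarrow> bool list set \<Rightarrow> (bool list \<Rightarrow> bool) \<Rightarrow> nat \<Rightarrow> nat \<Rightarrow> complex mat list \<Rightarrow> nat set \<Rightarrow> bool" where
  "quantum_alg_computes n X f T m Us Acc \<longleftrightarrow>
     m \<ge> 1 \<and> length Us = T + 1 \<and> (\<forall>U\<in>set Us. unitary (qdim n m) U) \<and>
     (\<forall>x\<in>X. (f x \<longrightarrow> accept_prob n m x Us Acc > 1/2) \<and>
             (\<not> f x \<longrightarrow> 1 - accept_prob n m x Us Acc > 1/2))"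

definition UQ :: "nat \<Rightarrow> bool list set \<Rightarrow> (bool list \<Rightarrow> bool) \<Rightarrow> nat" where
  "UQ n X f = (LEAST T. \<exists>m Us Acc. quantum_alg_computes n X f T m Us Acc)"

end

theory Submission
  imports Defs
begin

no_notation Finite_Cartesian_Product.vec_nth (infixl "$" 90)

definition polyd :: "nat \<Rightarrow> nat \<Rightarrow> (bool list \<Rightarrow> real) \<Rightarrow> bool" where
  "polyd n d g \<longleftrightarrow> (\<exists>c. mpoly_deg_le n c d \<and> (\<forall>x\<in>cube n. g x = mpoly_eval n c x))"

lemma bit01: "bit b = 0 \<or> bit b = 1" by (simp add: bit_def)

lemma prod01:
  assumes "finite S" "\<And>i. i \<in> S \<Longrightarrow> f i = 0 \<or> f i = (1::real)"
  shows "prod f S = (if \<forall>i\<in>S. f i = 1 then 1 else 0)"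
  using assms
proof (induction S rule: finite_induct)
  case empty then show ?case by simp
next
  case (insert a F)
  then show ?case by (cases "f a = 1") auto
qed

lemma mono_bits: "finite S \<Longrightarrow> (\<Prod>i\<in>S. bit (x ! i)) = (if \<forall>i\<in>S. x ! i then 1 else 0)"
  by (subst prod01) (auto simp: bit_def)

lemma mono_union: "finite S \<Longrightarrow> finite T \<Longrightarrow>
   (\<Prod>i\<in>S \<union> T. bit (x ! i)) = (\<Prod>i\<in>S. bit (x ! i)) * (\<Prod>i\<in>T. bit (x ! i))"
  by (simp add: mono_bits) blast

lemma sum_single: "finite A \<Longrightarrow> S0 \<in> A \<Longrightarrow> (\<Sum>S\<in>A. (if S = S0 then a else 0) * h S) = a * (h S0::real)"
proof -
  assume "finite A" "S0 \<in> A"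
  have "(\<Sum>S\<in>A. (if S = S0 then a else 0) * h S) = (\<Sum>S\<in>A. if S = S0 then a * h S else 0)"
    by (rule sum.cong) auto
  then show ?thesis using \<open>finite A\<close> \<open>S0 \<in> A\<close> by simp
qed

lemma polyd_cong: "polyd n d g \<Longrightarrow> (\<And>x. x \<in> cube n \<Longrightarrow> g x = h x) \<Longrightarrow> polyd n d h"
  unfolding polyd_def by metis

lemma polyd_mono: "polyd n d g \<Longrightarrow> d \<le> e \<Longrightarrow> polyd n e g"
  unfolding polyd_def mpoly_deg_le_def by (meson order_trans)

lemma polyd_const: "polyd n 0 (\<lambda>x. a)"
  unfolding polyd_def
proof (intro exI[of _ "\<lambda>S. if S = {} then a else 0"] conjI ballI)
  show "mpoly_deg_le n (\<lambda>S. if S = {} then a else 0) 0"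
    by (auto simp: mpoly_deg_le_def)
  fix x show "a = mpoly_eval n (\<lambda>S. if S = {} then a else 0) x"
    unfolding mpoly_eval_def by (subst sum_single) auto
qed

lemma polyd_var: "i < n \<Longrightarrow> polyd n 1 (\<lambda>x. bit (x ! i))"
  unfolding polyd_def
proof (intro exI[of _ "\<lambda>S. if S = {i} then 1 else 0"] conjI ballI)
  show "mpoly_deg_le n (\<lambda>S. if S = {i} then 1 else 0) 1"
    by (auto simp: mpoly_deg_le_def)
  fix x assume "i < n" show "bit (x ! i) = mpoly_eval n (\<lambda>S. if S = {i} then 1 else 0) x"
    unfolding mpoly_eval_def using \<open>i < n\<close> by (subst sum_single) auto
qed

lemma polyd_add: "polyd n d g \<Longrightarrow> polyd n d h \<Longrightarrow> polyd n d (\<lambda>x. g x + h x)"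
  unfolding polyd_def
proof (elim exE conjE)
  fix c1 c2 assume h1: "mpoly_deg_le n c1 d" "\<forall>x\<in>cube n. g x = mpoly_eval n c1 x"
    and h2: "mpoly_deg_le n c2 d" "\<forall>x\<in>cube n. h x = mpoly_eval n c2 x"
  show "\<exists>c. mpoly_deg_le n c d \<and> (\<forall>x\<in>cube n. g x + h x = mpoly_eval n c x)"
  proof (intro exI[of _ "\<lambda>S. c1 S + c2 S"] conjI ballI)
    show "mpoly_deg_le n (\<lambda>S. c1 S + c2 S) d"
      using h1(1) h2(1) unfolding mpoly_deg_le_def by (metis add.right_neutral add_0)
    fix x assume "x \<in> cube n" then show "g x + h x = mpoly_eval n (\<lambda>S. c1 S + c2 S) x"
      using h1(2) h2(2) by (simp add: mpoly_eval_def distrib_right sum.distrib)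
  qed
qed

lemma polyd_scale: "polyd n d g \<Longrightarrow> polyd n d (\<lambda>x. a * g x)"
  unfolding polyd_def
proof (elim exE conjE)
  fix c1 assume h1: "mpoly_deg_le n c1 d" "\<forall>x\<in>cube n. g x = mpoly_eval n c1 x"
  show "\<exists>c. mpoly_deg_le n c d \<and> (\<forall>x\<in>cube n. a * g x = mpoly_eval n c x)"
  proof (intro exI[of _ "\<lambda>S. a * c1 S"] conjI ballI)
    show "mpoly_deg_le n (\<lambda>S. a * c1 S) d"
      using h1(1) unfolding mpoly_deg_le_def by simp
    fix x assume "x \<in> cube n" then show "a * g x = mpoly_eval n (\<lambda>S. a * c1 S) x"
      using h1(2) by (simp add: mpoly_eval_def sum_distrib_left mult.assoc)
  qed
qed

lemma polyd_sum: "finite A \<Longrightarrow> (\<And>a. a \<in> A \<Longrightarrow> polyd n d (g a)) \<Longrightarrow> polyd n d (\<lambda>x. \<Sum>a\<in>A. g a x)"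
proof (induction A rule: finite_induct)
  case empty then show ?case using polyd_const[of n 0] polyd_mono by fastforce
next
  case (insert a F)
  then show ?case by (simp add: polyd_add)
qed

lemma polyd_mult:
  assumes "polyd n d g" "polyd n e h"
  shows "polyd n (d + e) (\<lambda>x. g x * h x)"
proof -
  obtain a where ha: "mpoly_deg_le n a d" "\<forall>x\<in>cube n. g x = mpoly_eval n a x"
    using assms(1) unfolding polyd_def by blast
  obtain b where hb: "mpoly_deg_le n b e" "\<forall>x\<in>cube n. h x = mpoly_eval n b x"
    using assms(2) unfolding polyd_def by blast
  define P where "P = Pow {0..<n}"
  have finP: "finite P" unfolding P_def by simp
  define c where "c U = (\<Sum>p\<in>{p\<in>P\<times>P. fst p \<union> snd p = U}. a (fst p) * b (snd p))" for U
  show ?thesis unfolding polyd_def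
  proof (intro exI[of _ c] conjI ballI)
    show "mpoly_deg_le n c (d + e)"
      unfolding mpoly_deg_le_def
    proof (intro ballI impI)
      fix U assume U: "U \<in> Pow {0..<n}" "c U \<noteq> 0"
      then obtain p where p: "p \<in> P \<times> P" "fst p \<union> snd p = U" "a (fst p) * b (snd p) \<noteq> 0"
        unfolding c_def using sum.neutral by (smt (verit, del_insts) mem_Collect_eq)
      have "card (fst p) \<le> d" using ha(1) p unfolding mpoly_deg_le_def P_def by auto
      moreover have "card (snd p) \<le> e" using hb(1) p unfolding mpoly_deg_le_def P_def by auto
      moreover have "card U \<le> card (fst p) + card (snd p)" using p(2) card_Un_le by blast
      ultimately show "card U \<le> d + e" by linarith
    qed
    fix x assume x: "x \<in> cube n"
    define m where "m S = (\<Prod>i\<in>S. bit (x ! i))" for S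
    have fin: "\<And>S. S \<in> P \<Longrightarrow> finite S" unfolding P_def by (auto intro: finite_subset)
    have "g x * h x = (\<Sum>S\<in>P. a S * m S) * (\<Sum>T\<in>P. b T * m T)"
      using ha(2) hb(2) x unfolding mpoly_eval_def P_def m_def by simp
    also have "\<dots> = (\<Sum>S\<in>P. \<Sum>T\<in>P. (a S * m S) * (b T * m T))"
      by (simp add: sum_product)
    also have "\<dots> = (\<Sum>p\<in>P\<times>P. a (fst p) * b (snd p) * m (fst p \<union> snd p))"
      unfolding sum.cartesian_product
      by (intro sum.cong refl) (auto simp: m_def mono_union fin)
    also have "\<dots> = (\<Sum>U\<in>P. \<Sum>p\<in>{p\<in>P\<times>P. fst p \<union> snd p = U}. a (fst p) * b (snd p) * m (fst p \<union> snd p))"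
      by (rule sum.group[symmetric]) (auto simp: finP P_def)
    also have "\<dots> = (\<Sum>U\<in>P. c U * m U)"
      unfolding c_def sum_distrib_right by (intro sum.cong refl) auto
    finally show "g x * h x = mpoly_eval n c x" unfolding mpoly_eval_def P_def m_def .
  qed
qed

lemma polyd_one_minus_var: "i < n \<Longrightarrow> polyd n 1 (\<lambda>x. 1 - bit (x ! i))"
proof -
  assume "i < n"
  have "polyd n 1 (\<lambda>x. 1 + (-1) * bit (x ! i))"
    by (rule polyd_add[OF polyd_mono[OF polyd_const] polyd_scale[OF polyd_var[OF \<open>i<n\<close>]]]) simp
  then show ?thesis by simp
qed


lemma dt_poly: "dt_valid n t \<Longrightarrow> polyd n (dt_depth t) (\<lambda>x. if dt_eval t x then 1 else 0)"
proof (induction t)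
  case (Leaf b) then show ?case using polyd_const[of n "if b then 1 else 0"] by simp
next
  case (Query i t0 t1)
  then have i: "i < n" and v0: "polyd n (dt_depth t0) (\<lambda>x. if dt_eval t0 x then 1 else 0)"
    and v1: "polyd n (dt_depth t1) (\<lambda>x. if dt_eval t1 x then 1 else 0)" by auto
  have a: "polyd n (Suc (max (dt_depth t0) (dt_depth t1)))
     (\<lambda>x. bit (x ! i) * (if dt_eval t1 x then 1 else 0))"
    using polyd_mult[OF polyd_var[OF i] v1] polyd_mono by fastforce
  have b: "polyd n (Suc (max (dt_depth t0) (dt_depth t1)))
     (\<lambda>x. (1 - bit (x ! i)) * (if dt_eval t0 x then 1 else 0))"
    using polyd_mult[OF polyd_one_minus_var[OF i] v0] polyd_mono by fastforce
  have "polyd n (Suc (max (dt_depth t0) (dt_depth t1))) (\<lambda>x. if dt_eval (Query i t0 t1) x then 1 else 0)"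
    by (rule polyd_cong[OF polyd_add[OF a b]]) (auto simp: bit_def)
  then show ?case by simp
qed

fun trees_le :: "nat \<Rightarrow> nat \<Rightarrow> dtree set" where
  "trees_le n 0 = range Leaf"
| "trees_le n (Suc k) = range Leaf \<union> (\<lambda>(i, a, b). Query i a b) ` ({..<n} \<times> trees_le n k \<times> trees_le n k)"

lemma finite_trees_le: "finite (trees_le n k)"
proof (induction k)
  case 0 have "range Leaf = Leaf ` UNIV" by simp
  then show ?case by simp
next
  case (Suc k) then show ?case by simp
qed

lemma trees_le_mem: "dt_valid n t \<Longrightarrow> dt_depth t \<le> k \<Longrightarrow> t \<in> trees_le n k"
proof (induction t arbitrary: k)
  case (Leaf b) then show ?case by (cases k) auto
next
  case (Query i t0 t1)
  then obtain k' where k: "k = Suc k'" by (cases k) auto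
  with Query show ?case by (force simp: image_iff)
qed

lemma prob_poly:
  assumes "\<forall>t\<in>set_pmf P. dt_valid n t \<and> dt_depth t \<le> k"
  shows "polyd n k (\<lambda>x. measure_pmf.prob P {t. dt_eval t x})"
proof -
  have fin: "finite (set_pmf P)"
    using assms trees_le_mem finite_trees_le by (meson finite_subset subsetI)
  have eq: "measure_pmf.prob P {t. dt_eval t x} = (\<Sum>t\<in>set_pmf P. pmf P t * (if dt_eval t x then 1 else 0))" for x
  proof -
    have "measure_pmf.prob P {t. dt_eval t x} = measure_pmf.prob P ({t. dt_eval t x} \<inter> set_pmf P)"
      by (simp add: measure_Int_set_pmf)
    also have "\<dots> = sum (pmf P) ({t. dt_eval t x} \<inter> set_pmf P)"
      using fin by (simp add: measure_measure_pmf_finite)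
    also have "\<dots> = (\<Sum>t\<in>set_pmf P. pmf P t * (if dt_eval t x then 1 else 0))"
      using fin by (simp add: sum.inter_restrict Int_commute if_distrib cong: if_cong)
    finally show ?thesis .
  qed
  have "polyd n k (\<lambda>x. \<Sum>t\<in>set_pmf P. pmf P t * (if dt_eval t x then 1 else 0))"
    using fin assms by (intro polyd_sum polyd_scale) (auto intro: polyd_mono dt_poly)
  then show ?thesis by (rule polyd_cong) (simp add: eq)
qed

lemma prob_compl_dt: "measure_pmf.prob P {t. \<not> dt_eval t x} = 1 - measure_pmf.prob P {t. dt_eval t x}"
proof -
  have "{t. \<not> dt_eval t x} = space (measure_pmf P) - {t. dt_eval t x}" by auto
  then show ?thesis using measure_pmf.prob_compl[of "{t. dt_eval t x}" P] by simp
qed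

lemma classical_to_poly:
  assumes "rand_alg_computes n X f k P" "X \<subseteq> cube n"
  shows "\<exists>c. unbounded_poly n X f c \<and> mpoly_deg_le n c k"
proof -
  have sup: "\<forall>t\<in>set_pmf P. dt_valid n t \<and> dt_depth t \<le> k"
    and cor: "\<forall>x\<in>X. measure_pmf.prob P {t. dt_eval t x = f x} > 1/2"
    using assms unfolding rand_alg_computes_def by auto
  obtain c where c: "mpoly_deg_le n c k" "\<forall>x\<in>cube n. measure_pmf.prob P {t. dt_eval t x} = mpoly_eval n c x"
    using prob_poly[OF sup] unfolding polyd_def by blast
  have "unbounded_poly n X f c"
    unfolding unbounded_poly_def
  proof (intro conjI ballI impI)
    fix x assume "x \<in> cube n"
    then show "0 \<le> mpoly_eval n c x" using c(2) by (metis measure_nonneg)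
  next
    fix x assume "x \<in> cube n"
    then show "mpoly_eval n c x \<le> 1" using c(2) by (metis measure_pmf.prob_le_1)
  next
    fix x assume x: "x \<in> X" "f x"
    have xc: "x \<in> cube n" using x assms(2) by auto
    have p: "measure_pmf.prob P {t. dt_eval t x = f x} > 1/2" using cor x by auto
    then show "1/2 < mpoly_eval n c x" using c(2) xc x by simp
  next
    fix x assume x: "x \<in> X" "\<not> f x"
    have xc: "x \<in> cube n" using x assms(2) by auto
    have p: "measure_pmf.prob P {t. dt_eval t x = f x} > 1/2" using cor x by auto
    then show "mpoly_eval n c x < 1/2" using c(2) xc x prob_compl_dt[of P x] by simp
  qed
  with c(1) show ?thesis by blast
qed

function fulltree :: "nat \<Rightarrow> (bool list \<Rightarrow> bool) \<Rightarrow> nat \<Rightarrow> bool list \<Rightarrow> dtree" where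
  "fulltree n f i acc = (if i < n then Query i (fulltree n f (Suc i) (acc @ [False])) (fulltree n f (Suc i) (acc @ [True]))
      else Leaf (f acc))"
  by auto
termination by (relation "Wellfounded.measure (\<lambda>(n, f, i, acc). n - i)") auto

declare fulltree.simps[simp del]

lemma fulltree_valid: "dt_valid n (fulltree n f i acc) \<and> dt_depth (fulltree n f i acc) \<le> n - i"
proof (induction n f i acc rule: fulltree.induct)
  case (1 n f i acc)
  then show ?case by (subst fulltree.simps) (auto simp: fulltree.simps[of n f i acc])
qed

lemma fulltree_eval:
  "length x = n \<Longrightarrow> i \<le> n \<Longrightarrow> acc = take i x \<Longrightarrow> dt_eval (fulltree n f i acc) x = f x"
proof (induction n f i acc rule: fulltree.induct)
  case (1 n f i acc)
  show ?case
  proof (cases "i < n")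
    case True
    have t1: "take (Suc i) x = take i x @ [x ! i]" using True 1(3) by (simp add: take_Suc_conv_app_nth)
    show ?thesis
    proof (cases "x ! i")
      case True
      then show ?thesis using 1 \<open>i < n\<close> t1 by (subst fulltree.simps) auto
    next
      case False
      then show ?thesis using 1 \<open>i < n\<close> t1 by (subst fulltree.simps) auto
    qed
  next
    case False
    then have "i = n" using 1 by simp
    then show ?thesis using 1 by (subst fulltree.simps) auto
  qed
qed

lemma classical_exists: "X \<subseteq> cube n \<Longrightarrow> rand_alg_computes n X f n (return_pmf (fulltree n f 0 []))"
  unfolding rand_alg_computes_def using fulltree_valid[of n f 0 "[]"]
  by (auto simp: fulltree_eval cube_def subset_iff)

fun allones :: "nat list \<Rightarrow> bool \<Rightarrow> bool \<Rightarrow> dtree" where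
  "allones [] b0 b1 = Leaf b1"
| "allones (i # is) b0 b1 = Query i (Leaf b0) (allones is b0 b1)"

lemma allones_eval: "dt_eval (allones is b0 b1) x = (if \<forall>i\<in>set is. x ! i then b1 else b0)"
  by (induction "is") auto

lemma allones_depth: "dt_depth (allones is b0 b1) = length is"
  by (induction "is") auto

lemma allones_valid: "set is \<subseteq> {..<n} \<Longrightarrow> dt_valid n (allones is b0 b1)"
  by (induction "is") auto

lemma sum_bool: "(\<Sum>b\<in>(UNIV::bool set). g b) = g True + g False"
  by (simp add: UNIV_bool add.commute)

lemma poly_to_classical:
  assumes up: "unbounded_poly n X f c" and dg: "mpoly_deg_le n c d" and Xne: "X \<noteq> {}" and Xc: "X \<subseteq> cube n"
  shows "\<exists>P. rand_alg_computes n X f d P"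
proof -
  define PS where "PS = Pow {0..<n}"
  have finPS: "finite PS" unfolding PS_def by simp
  have finS: "S \<in> PS \<Longrightarrow> finite S" for S unfolding PS_def by (auto intro: finite_subset)
  define a where "a S = c S - (if S = {} then 1/2 else 0)" for S
  define m where "m S x = (\<Prod>i\<in>S. bit (x ! i))" for S and x :: "bool list"
  define p where "p x = (\<Sum>S\<in>PS. a S * m S x)" for x
  have p_eq: "p x = mpoly_eval n c x - 1/2" for x
  proof -
    have "p x = (\<Sum>S\<in>PS. c S * m S x) - (\<Sum>S\<in>PS. (if S = {} then 1/2 else 0) * m S x)"
      unfolding p_def a_def by (simp add: left_diff_distrib sum_subtractf)
    also have "(\<Sum>S\<in>PS. (if S = {} then 1/2 else 0) * m S x) = 1/2"
      by (subst sum_single) (auto simp: finPS PS_def m_def)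
    finally show ?thesis unfolding mpoly_eval_def PS_def m_def by simp
  qed
  define A where "A = (\<Sum>S\<in>PS. \<bar>a S\<bar>)"
  have Apos: "A > 0"
  proof (rule ccontr)
    assume "\<not> A > 0"
    then have "A = 0" unfolding A_def by (metis abs_ge_zero order_less_le sum_nonneg)
    then have "\<forall>S\<in>PS. \<bar>a S\<bar> = 0" unfolding A_def using sum_nonneg_eq_0_iff[OF finPS, of "\<lambda>S. \<bar>a S\<bar>"] by auto
    then have "p x = 0" for x unfolding p_def by simp
    moreover obtain x where "x \<in> X" using Xne by blast
    ultimately show False using up p_eq unfolding unbounded_poly_def by force
  qed
  define w where "w S = \<bar>a S\<bar> / (2 * A)" for S
  define tr where "tr S b = (if a S = 0 then Leaf b else allones (sorted_list_of_set S) b (0 < a S))" for S b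
  obtain xs where xs: "set xs = PS \<times> (UNIV :: bool set)" "distinct xs"
    using finite_distinct_list[of "PS \<times> (UNIV :: bool set)"] finPS by auto
  define L where "L = map (\<lambda>(S, b). (tr S b, w S)) xs"
  have sumw: "(\<Sum>q\<in>PS \<times> (UNIV::bool set). g q) = (\<Sum>S\<in>PS. g (S, True) + g (S, False))" for g :: "_ \<Rightarrow> real"
  proof -
    have "(\<Sum>S\<in>PS. \<Sum>b\<in>UNIV. g (S,b)) = (\<Sum>z\<in>PS\<times>UNIV. case z of (S,b) \<Rightarrow> g (S,b))"
      by (rule sum.cartesian_product)
    then show ?thesis by (simp add: sum_bool case_prod_beta)
  qed
  have sumL: "sum_list (map (\<lambda>e. h (fst e) (snd e)) L) = (\<Sum>S\<in>PS. h (tr S True) (w S) + h (tr S False) (w S))" for h :: "_ \<Rightarrow> _ \<Rightarrow> real"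
  proof -
    have "sum_list (map (\<lambda>e. h (fst e) (snd e)) L) = sum_list (map (\<lambda>(S, b). h (tr S b) (w S)) xs)"
      unfolding L_def by (induction xs) (auto simp: split_beta)
    also have "\<dots> = (\<Sum>q\<in>PS \<times> (UNIV::bool set). (\<lambda>(S, b). h (tr S b) (w S)) q)"
      using xs by (simp add: sum_list_distinct_conv_sum_set)
    finally show ?thesis by (simp add: sumw)
  qed
  have wf: "pmf_of_list_wf L"
  proof (rule pmf_of_list_wfI)
    fix y assume "y \<in> set (map snd L)"
    then show "0 \<le> y" unfolding L_def w_def using Apos by auto
  next
    have "sum_list (map snd L) = (\<Sum>S\<in>PS. w S + w S)" using sumL[of "\<lambda>t v. v"] by simp
    also have "\<dots> = (\<Sum>S\<in>PS. \<bar>a S\<bar>) / A" unfolding w_def by (simp add: sum_divide_distrib[symmetric])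
    finally show "sum_list (map snd L) = 1" using Apos unfolding A_def by simp
  qed
  define P where "P = pmf_of_list L"
  show ?thesis
  proof (intro exI[of _ P])
    show "rand_alg_computes n X f d P"
      unfolding rand_alg_computes_def
    proof (rule conjI[OF ballI ballI])
      fix t assume "t \<in> set_pmf P"
      then obtain S b where Sb: "(S, b) \<in> set xs" "t = tr S b"
        using set_pmf_of_list[OF wf] unfolding P_def L_def by auto
      then have S: "S \<subseteq> {0..<n}" using xs unfolding PS_def by auto
      then have fS: "finite S" by (rule finite_subset) simp
      show "dt_valid n t \<and> dt_depth t \<le> d"
      proof (cases "a S = 0")
        case True then show ?thesis using Sb by (simp add: tr_def)
      next
        case False
        have "card S \<le> d"
        proof (cases "S = {}")
          case True then show ?thesis by simp
        next
          case False
          then have "c S \<noteq> 0" using \<open>a S \<noteq> 0\<close> unfolding a_def by simp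
          then show ?thesis using dg S unfolding mpoly_deg_le_def by auto
        qed
        then show ?thesis using Sb False S fS
          by (auto simp: tr_def allones_depth intro!: allones_valid)
      qed
    next
      fix x assume x: "x \<in> X"
      have xc: "x \<in> cube n" using x Xc by auto
      define sg where "sg S = (if (0 < a S) = f x then 1 else -1::real)" for S
      have per: "(if dt_eval (tr S True) x = f x then w S else 0) + (if dt_eval (tr S False) x = f x then w S else 0)
           = w S + w S * m S x * sg S" if "S \<in> PS" for S
      proof (cases "a S = 0")
        case True then show ?thesis unfolding w_def by simp
      next
        case False
        have ms: "m S x = (if \<forall>i\<in>S. x ! i then 1 else 0)" unfolding m_def using finS[OF that] by (simp add: mono_bits)
        have ss: "set (sorted_list_of_set S) = S" using finS[OF that] by simp
        show ?thesis using False unfolding tr_def ms sg_def by (auto simp: allones_eval ss)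
      qed
      have key: "\<bar>a S\<bar> * sg S = (if f x then a S else - a S)" for S
        unfolding sg_def by auto
      have "measure_pmf.prob P {t. dt_eval t x = f x}
          = sum_list (map (\<lambda>e. if dt_eval (fst e) x = f x then snd e else 0) L)"
        unfolding P_def using wf by (simp add: measure_pmf_of_list sum_list_map_filter')
      also have "\<dots> = (\<Sum>S\<in>PS. w S + w S * m S x * sg S)"
        using sumL[of "\<lambda>t v. if dt_eval t x = f x then v else 0"] per by (simp cong: sum.cong)
      also have "\<dots> = (\<Sum>S\<in>PS. w S + w S) / 2 + (\<Sum>S\<in>PS. (\<bar>a S\<bar> * sg S) * m S x) / (2 * A)"
        unfolding w_def by (simp add: sum.distrib sum_divide_distrib field_simps)
      also have "(\<Sum>S\<in>PS. w S + w S) = 1"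
        unfolding w_def using Apos unfolding A_def by (simp add: sum_divide_distrib[symmetric])
      also have "(\<Sum>S\<in>PS. (\<bar>a S\<bar> * sg S) * m S x) = (if f x then p x else - p x)"
        unfolding key p_def by (auto simp: sum_negf)
      finally have pr: "measure_pmf.prob P {t. dt_eval t x = f x} = 1/2 + (if f x then p x else - p x) / (2 * A)" .
      have "f x \<Longrightarrow> p x > 0" "\<not> f x \<Longrightarrow> p x < 0" using up x unfolding unbounded_poly_def p_eq by auto
      then have "(if f x then p x else - p x) / (2 * A) > 0" using Apos by auto
      then show "measure_pmf.prob P {t. dt_eval t x = f x} > 1/2" using pr by linarith
    qed
  qed
qed



definition ri :: "nat \<Rightarrow> nat \<Rightarrow> nat" where "ri m r = r div m div 2"
definition rb :: "nat \<Rightarrow> nat \<Rightarrow> bool" where "rb m r = odd (r div m)"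
definition rz :: "nat \<Rightarrow> nat \<Rightarrow> nat" where "rz m r = r mod m"

lemma qidx_decode:
  assumes "z < m"
  shows "ri m (qidx m i b z) = i" "rb m (qidx m i b z) = b" "rz m (qidx m i b z) = z"
proof -
  have d: "qidx m i b z div m = 2 * i + (if b then 1 else 0)"
    using assms unfolding qidx_def by simp
  show "ri m (qidx m i b z) = i" unfolding ri_def d by simp
  show "rb m (qidx m i b z) = b" unfolding rb_def d by simp
  show "rz m (qidx m i b z) = z" unfolding rz_def qidx_def using assms by simp
qed

lemma qidx_lt: "i < n \<Longrightarrow> z < m \<Longrightarrow> qidx m i b z < qdim n m"
proof -
  assume a: "i < n" "z < m"
  have "2 * i + (if b then 1 else 0) + 1 \<le> 2 * n" using a by auto
  then have "(2 * i + (if b then 1 else 0) + 1) * m \<le> 2 * n * m" by (rule mult_right_mono) simp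
  then show ?thesis unfolding qidx_def qdim_def using a by (simp add: algebra_simps)
qed

lemma qidx_surj:
  assumes "r < qdim n m"
  shows "r = qidx m (ri m r) (rb m r) (rz m r)" "ri m r < n" "rz m r < m"
proof -
  have m: "m > 0" using assms unfolding qdim_def by (cases m) auto
  have e: "2 * (r div m div 2) + (if odd (r div m) then 1 else 0) = r div m"
    using div_mult_mod_eq[of "r div m" 2] by (cases "odd (r div m)") (auto simp: odd_iff_mod_2_eq_one)
  show "r = qidx m (ri m r) (rb m r) (rz m r)" unfolding qidx_def ri_def rb_def rz_def e by simp
  have "r div m < 2 * n" using assms m unfolding qdim_def by (simp add: less_mult_imp_div_less)
  then show "ri m r < n" unfolding ri_def by simp
  show "rz m r < m" unfolding rz_def using m by simp
qed

lemma xor2: "((b \<noteq> a) \<noteq> a) = (b::bool)" by auto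

lemma sum_delta1: "finite A \<Longrightarrow> (\<Sum>c\<in>A. (if c = s then 1 else 0) * g c) = (if s \<in> A then g s else (0::'a::comm_ring_1))"
proof -
  assume "finite A"
  have "(\<Sum>c\<in>A. (if c = s then 1 else 0) * g c) = (\<Sum>c\<in>A. if c = s then g c else 0)"
    by (rule sum.cong) auto
  then show ?thesis using \<open>finite A\<close> by simp
qed

lemma qidx_inj: "z < m \<Longrightarrow> z' < m \<Longrightarrow> (qidx m i b z = qidx m i' b' z') \<longleftrightarrow> (i = i' \<and> b = b' \<and> z = z')"
proof -
  assume z: "z < m" "z' < m"
  show ?thesis
  proof
    assume h: "qidx m i b z = qidx m i' b' z'"
    have "ri m (qidx m i b z) = ri m (qidx m i' b' z')" "rb m (qidx m i b z) = rb m (qidx m i' b' z')"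
      "rz m (qidx m i b z) = rz m (qidx m i' b' z')" using h by simp_all
    then show "i = i' \<and> b = b' \<and> z = z'" unfolding qidx_decode[OF z(1)] qidx_decode[OF z(2)] by simp
  qed simp
qed

definition qsig :: "nat \<Rightarrow> bool list \<Rightarrow> nat \<Rightarrow> nat" where
  "qsig m x r = qidx m (ri m r) (rb m r \<noteq> x ! ri m r) (rz m r)"

lemma qsig_lt: "r < qdim n m \<Longrightarrow> qsig m x r < qdim n m"
proof -
  assume r: "r < qdim n m"
  show ?thesis unfolding qsig_def using qidx_surj(2,3)[OF r] by (rule qidx_lt)
qed

lemma qsig_inv: "r < qdim n m \<Longrightarrow> qsig m x (qsig m x r) = r"
proof -
  assume r: "r < qdim n m"
  have z: "rz m r < m" using qidx_surj(3)[OF r] .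
  show ?thesis unfolding qsig_def[of m x "qsig m x r"]
    unfolding qsig_def qidx_decode[OF z] xor2 using qidx_surj(1)[OF r] by simp
qed

lemma qsig_bij: "bij_betw (qsig m x) {0..<qdim n m} {0..<qdim n m}"
  by (rule bij_betw_byWitness[where f'="qsig m x"]) (auto simp: qsig_inv qsig_lt)

lemma query_op_entry:
  assumes "r < qdim n m" "c < qdim n m"
  shows "query_op n m x $$ (r, c) = (if c = qsig m x r then 1 else 0)"
proof -
  have z: "rz m r < m" and i: "ri m r < n" using qidx_surj[OF assms(1)] by auto
  have "(\<exists>i<n. \<exists>b z. z < m \<and> c = qidx m i b z \<and> r = qidx m i (b \<noteq> x ! i) z) \<longleftrightarrow> c = qsig m x r"
  proof
    assume "\<exists>i<n. \<exists>b z. z < m \<and> c = qidx m i b z \<and> r = qidx m i (b \<noteq> x ! i) z"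
    then obtain i' b z' where h: "i' < n" "z' < m" "c = qidx m i' b z'" "r = qidx m i' (b \<noteq> x ! i') z'" by blast
    have e: "ri m r = i'" "rb m r = (b \<noteq> x ! i')" "rz m r = z'"
      using qidx_decode[OF h(2)] h(4) by simp_all
    show "c = qsig m x r" unfolding qsig_def e xor2 using h(3) .
  next
    assume c: "c = qsig m x r"
    show "\<exists>i<n. \<exists>b z. z < m \<and> c = qidx m i b z \<and> r = qidx m i (b \<noteq> x ! i) z"
    proof (intro exI conjI)
      show "ri m r < n" by fact
      show "rz m r < m" by fact
      show "c = qidx m (ri m r) (rb m r \<noteq> x ! ri m r) (rz m r)" using c unfolding qsig_def .
      show "r = qidx m (ri m r) ((rb m r \<noteq> x ! ri m r) \<noteq> x ! ri m r) (rz m r)"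
        using qidx_surj(1)[OF assms(1)] unfolding xor2 .
    qed
  qed
  then show ?thesis unfolding query_op_def using assms by simp
qed

lemma query_op_carrier: "query_op n m x \<in> carrier_mat (qdim n m) (qdim n m)"
  unfolding query_op_def by simp

lemma mat_vec_sum:
  assumes "A \<in> carrier_mat N N'" "v \<in> carrier_vec N'" "r < N"
  shows "(A *\<^sub>v v) $ r = (\<Sum>c<N'. A $$ (r, c) * v $ c)"
  using assms by (auto simp: scalar_prod_def atLeast0LessThan intro!: sum.cong)

lemma query_op_vec:
  assumes "v \<in> carrier_vec (qdim n m)" "r < qdim n m"
  shows "(query_op n m x *\<^sub>v v) $ r = v $ (qsig m x r)"
proof -
  have "(query_op n m x *\<^sub>v v) $ r = (\<Sum>c<qdim n m. (if c = qsig m x r then 1 else 0) * v $ c)"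
    using assms by (simp add: mat_vec_sum[OF query_op_carrier] query_op_entry)
  also have "\<dots> = v $ (qsig m x r)" using qsig_lt[OF assms(2)]
    by (subst sum_delta1) auto
  finally show ?thesis .
qed

definition nrm :: "complex vec \<Rightarrow> real" where
  "nrm v = (\<Sum>j<dim_vec v. (cmod (v $ j))\<^sup>2)"

lemma query_op_nrm:
  assumes "v \<in> carrier_vec (qdim n m)"
  shows "nrm (query_op n m x *\<^sub>v v) = nrm v"
proof -
  have "nrm (query_op n m x *\<^sub>v v) = (\<Sum>j<qdim n m. (cmod (v $ qsig m x j))\<^sup>2)"
    unfolding nrm_def using assms query_op_carrier[of n m x]
    by (intro sum.cong) (auto simp del: index_mult_mat_vec simp: query_op_vec)
  also have "\<dots> = (\<Sum>j<qdim n m. (cmod (v $ j))\<^sup>2)"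
    using sum.reindex_bij_betw[OF qsig_bij[of m x n], of "\<lambda>j. (cmod (v $ j))\<^sup>2"]
    by (simp add: atLeast0LessThan)
  finally show ?thesis unfolding nrm_def using assms by simp
qed

lemma adjoint_entry: "A \<in> carrier_mat N N \<Longrightarrow> i < N \<Longrightarrow> j < N \<Longrightarrow> adjoint A $$ (i, j) = cnj (A $$ (j, i))"
  unfolding adjoint_def by simp

lemma unitary_cols:
  assumes "unitary N U" "i < N" "j < N"
  shows "(\<Sum>r<N. cnj (U $$ (r, i)) * U $$ (r, j)) = (if i = j then 1 else 0)"
proof -
  have U: "U \<in> carrier_mat N N" and e: "adjoint U * U = 1\<^sub>m N" using assms unfolding unitary_def by auto
  have "(adjoint U * U) $$ (i, j) = (\<Sum>r<N. cnj (U $$ (r, i)) * U $$ (r, j))"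
    using U assms(2,3) by (simp add: adjoint_def scalar_prod_def atLeast0LessThan)
  then show ?thesis using e assms(2,3) by simp
qed

lemma nrm_complex: "complex_of_real (nrm v) = (\<Sum>j<dim_vec v. v $ j * cnj (v $ j))"
  unfolding nrm_def of_real_sum by (intro sum.cong refl) (rule complex_norm_square)

lemma unitary_nrm:
  assumes "unitary N U" "v \<in> carrier_vec N"
  shows "nrm (U *\<^sub>v v) = nrm v"
proof -
  have U: "U \<in> carrier_mat N N" using assms unfolding unitary_def by auto
  have w: "(U *\<^sub>v v) $ r = (\<Sum>c<N. U $$ (r, c) * v $ c)" if "r < N" for r
    using mat_vec_sum[OF U assms(2) that] .
  have "complex_of_real (nrm (U *\<^sub>v v)) = (\<Sum>r<N. (\<Sum>c<N. U $$ (r, c) * v $ c) * cnj (\<Sum>c'<N. U $$ (r, c') * v $ c'))"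
    unfolding nrm_complex using U by (simp del: index_mult_mat_vec add: w)
  also have "\<dots> = (\<Sum>r<N. \<Sum>c<N. \<Sum>c'<N. (U $$ (r, c) * v $ c) * (cnj (U $$ (r, c')) * cnj (v $ c')))"
    unfolding cnj_sum sum_product by simp
  also have "\<dots> = (\<Sum>c<N. \<Sum>c'<N. \<Sum>r<N. (U $$ (r, c) * v $ c) * (cnj (U $$ (r, c')) * cnj (v $ c')))"
    by (rule trans[OF sum.swap], rule sum.cong[OF refl], rule sum.swap)
  also have "\<dots> = (\<Sum>c<N. \<Sum>c'<N. (v $ c * cnj (v $ c')) * (\<Sum>r<N. cnj (U $$ (r, c')) * U $$ (r, c)))"
    by (intro sum.cong refl) (unfold sum_distrib_left, intro sum.cong refl, simp add: ac_simps)
  also have "\<dots> = (\<Sum>c<N. \<Sum>c'<N. (if c' = c then 1 else 0) * (v $ c * cnj (v $ c')))"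
    by (intro sum.cong refl) (simp add: unitary_cols[OF assms(1)])
  also have "\<dots> = (\<Sum>c<N. v $ c * cnj (v $ c))"
    by (intro sum.cong refl) (simp add: sum_delta1)
  also have "\<dots> = complex_of_real (nrm v)" unfolding nrm_complex using assms(2) by simp
  finally show ?thesis by (simp only: of_real_eq_iff)
qed

lemma qrun_props:
  assumes "\<forall>U\<in>set Us. unitary (qdim n m) U" "v \<in> carrier_vec (qdim n m)"
  shows "qrun (query_op n m x) Us v \<in> carrier_vec (qdim n m) \<and> nrm (qrun (query_op n m x) Us v) = nrm v"
  using assms
proof (induction "query_op n m x" Us v rule: qrun.induct)
  case (1 v) then show ?case by simp
next
  case (2 U v)
  then have "unitary (qdim n m) U" by simp
  then show ?case using 2 unitary_nrm[of "qdim n m" U v] unfolding unitary_def by auto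
next
  case (3 U V Us v)
  have u: "unitary (qdim n m) U" using 3 by simp
  then have Uc: "U \<in> carrier_mat (qdim n m) (qdim n m)" unfolding unitary_def by simp
  let ?w = "query_op n m x *\<^sub>v (U *\<^sub>v v)"
  have wc: "?w \<in> carrier_vec (qdim n m)" using Uc 3(3) query_op_carrier[of n m x] by auto
  have wn: "nrm ?w = nrm v" using query_op_nrm[of "U *\<^sub>v v" n m x] Uc 3(3) unitary_nrm[OF u 3(3)] by auto
  show ?case using 3(1)[OF _ wc] 3(2) wn by simp
qed

lemma nrm_unit: "N > 0 \<Longrightarrow> nrm (unit_vec N 0) = 1"
proof -
  assume "N > 0"
  have "nrm (unit_vec N 0) = (\<Sum>j<N. if j = 0 then 1 else 0)" unfolding nrm_def by (intro sum.cong) auto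
  then show ?thesis using \<open>N > 0\<close> by simp
qed

lemma accept_prob_bounds:
  assumes "\<forall>U\<in>set Us. unitary (qdim n m) U" "qdim n m > 0"
  shows "0 \<le> accept_prob n m x Us Acc" "accept_prob n m x Us Acc \<le> 1"
proof -
  define \<psi> where "\<psi> = qrun (query_op n m x) Us (unit_vec (qdim n m) 0)"
  have c0: "unit_vec (qdim n m) 0 \<in> carrier_vec (qdim n m)" by simp
  have q: "\<psi> \<in> carrier_vec (qdim n m) \<and> nrm \<psi> = nrm (unit_vec (qdim n m) 0)"
    unfolding \<psi>_def by (rule qrun_props[OF assms(1) c0])
  have p: "\<psi> \<in> carrier_vec (qdim n m)" "nrm \<psi> = 1"
    using q nrm_unit[OF assms(2)] by simp_all
  show "0 \<le> accept_prob n m x Us Acc" unfolding accept_prob_def Let_def by (rule sum_nonneg) simp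
  have "accept_prob n m x Us Acc = (\<Sum>j\<in>Acc \<inter> {0..<qdim n m}. (cmod (\<psi> $ j))\<^sup>2)"
    unfolding accept_prob_def Let_def \<psi>_def ..
  also have "\<dots> \<le> (\<Sum>j\<in>{0..<qdim n m}. (cmod (\<psi> $ j))\<^sup>2)"
    by (rule sum_mono2) auto
  also have "\<dots> = nrm \<psi>" unfolding nrm_def using p(1) by (simp add: atLeast0LessThan)
  finally show "accept_prob n m x Us Acc \<le> 1" using p(2) by simp
qed


definition cpolyd :: "nat \<Rightarrow> nat \<Rightarrow> (bool list \<Rightarrow> complex) \<Rightarrow> bool" where
  "cpolyd n d g \<longleftrightarrow> polyd n d (\<lambda>x. Re (g x)) \<and> polyd n d (\<lambda>x. Im (g x))"

lemma cpolyd_const: "cpolyd n 0 (\<lambda>x. a)"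
  unfolding cpolyd_def by (simp add: polyd_const)

lemma cpolyd_mono: "cpolyd n d g \<Longrightarrow> d \<le> e \<Longrightarrow> cpolyd n e g"
  unfolding cpolyd_def using polyd_mono by blast

lemma cpolyd_cong: "cpolyd n d g \<Longrightarrow> (\<And>x. x \<in> cube n \<Longrightarrow> g x = h x) \<Longrightarrow> cpolyd n d h"
  unfolding cpolyd_def using polyd_cong by metis

lemma cpolyd_add: "cpolyd n d g \<Longrightarrow> cpolyd n d h \<Longrightarrow> cpolyd n d (\<lambda>x. g x + h x)"
  unfolding cpolyd_def by (simp add: polyd_add)

lemma cpolyd_sum: "finite A \<Longrightarrow> (\<And>a. a \<in> A \<Longrightarrow> cpolyd n d (g a)) \<Longrightarrow> cpolyd n d (\<lambda>x. \<Sum>a\<in>A. g a x)"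
  unfolding cpolyd_def by (simp add: Re_sum Im_sum polyd_sum)

lemma cpolyd_cmult: "cpolyd n d g \<Longrightarrow> cpolyd n d (\<lambda>x. a * g x)"
proof -
  assume h: "cpolyd n d g"
  have "polyd n d (\<lambda>x. Re a * Re (g x) + (- Im a) * Im (g x))"
    using h unfolding cpolyd_def by (intro polyd_add polyd_scale) auto
  moreover have "polyd n d (\<lambda>x. Re a * Im (g x) + Im a * Re (g x))"
    using h unfolding cpolyd_def by (intro polyd_add polyd_scale) auto
  ultimately show ?thesis unfolding cpolyd_def by simp
qed

lemma cpolyd_rmult: "polyd n e h \<Longrightarrow> cpolyd n d g \<Longrightarrow> cpolyd n (e + d) (\<lambda>x. complex_of_real (h x) * g x)"
  unfolding cpolyd_def by (simp add: polyd_mult)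

lemma cmod_sq: "cmod z * cmod z = Re z * Re z + Im z * Im z"
  using cmod_power2[of z] by (simp add: power2_eq_square)

lemma step_U:
  assumes U: "U \<in> carrier_mat N N" and V: "\<And>x. x \<in> cube n \<Longrightarrow> V x \<in> carrier_vec N"
    and P: "\<And>r. r < N \<Longrightarrow> cpolyd n d (\<lambda>x. V x $ r)" and r: "r < N"
  shows "cpolyd n d (\<lambda>x. (U *\<^sub>v V x) $ r)"
proof -
  have "cpolyd n d (\<lambda>x. \<Sum>c<N. U $$ (r, c) * V x $ c)"
    by (intro cpolyd_sum cpolyd_cmult P) auto
  then show ?thesis by (rule cpolyd_cong) (simp del: index_mult_mat_vec add: mat_vec_sum[OF U V r])
qed

lemma step_O:
  assumes V: "\<And>x. x \<in> cube n \<Longrightarrow> V x \<in> carrier_vec (qdim n m)"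
    and P: "\<And>r. r < qdim n m \<Longrightarrow> cpolyd n d (\<lambda>x. V x $ r)" and r: "r < qdim n m"
  shows "cpolyd n (Suc d) (\<lambda>x. (query_op n m x *\<^sub>v V x) $ r)"
proof -
  define i where "i = ri m r"
  define b where "b = rb m r"
  define z where "z = rz m r"
  have i: "i < n" and z: "z < m" and re: "r = qidx m i b z" using qidx_surj[OF r] unfolding i_def b_def z_def by auto
  have r1: "qidx m i b z < qdim n m" "qidx m i (\<not> b) z < qdim n m" using qidx_lt[OF i z] by auto
  have "cpolyd n (1 + d) (\<lambda>x. complex_of_real (1 - bit (x ! i)) * V x $ qidx m i b z + complex_of_real (bit (x ! i)) * V x $ qidx m i (\<not> b) z)"
    by (intro cpolyd_add cpolyd_rmult polyd_var polyd_one_minus_var P i r1)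
  then show ?thesis
  proof (rule cpolyd_cong[OF cpolyd_mono])
    fix x assume x: "x \<in> cube n"
    have "(query_op n m x *\<^sub>v V x) $ r = V x $ qsig m x r" by (rule query_op_vec[OF V[OF x] r])
    also have "qsig m x r = qidx m i (b \<noteq> x ! i) z" unfolding qsig_def i_def b_def z_def ..
    finally show "complex_of_real (1 - bit (x ! i)) * V x $ qidx m i b z + complex_of_real (bit (x ! i)) * V x $ qidx m i (\<not> b) z
        = (query_op n m x *\<^sub>v V x) $ r"
      by (cases "x ! i") (auto simp: bit_def)
  qed simp
qed

lemma qrun_cpoly:
  assumes "\<forall>U\<in>set Us. U \<in> carrier_mat (qdim n m) (qdim n m)" "Us \<noteq> []"
    and "\<And>x. x \<in> cube n \<Longrightarrow> V x \<in> carrier_vec (qdim n m)"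
    and "\<And>r. r < qdim n m \<Longrightarrow> cpolyd n d (\<lambda>x. V x $ r)"
  shows "(\<forall>x\<in>cube n. qrun (query_op n m x) Us (V x) \<in> carrier_vec (qdim n m)) \<and>
         (\<forall>r<qdim n m. cpolyd n (d + length Us - 1) (\<lambda>x. qrun (query_op n m x) Us (V x) $ r))"
  using assms
proof (induction Us arbitrary: V d rule: induct_list012)
  case 1 then show ?case by simp
next
  case (2 U)
  then have U: "U \<in> carrier_mat (qdim n m) (qdim n m)" by simp
  show ?case using 2 U step_U[OF U, of n V d] by auto
next
  case (3 U U' Us)
  have U: "U \<in> carrier_mat (qdim n m) (qdim n m)" using 3 by simp
  define W where "W x = query_op n m x *\<^sub>v (U *\<^sub>v V x)" for x
  have Wc: "\<And>x. x \<in> cube n \<Longrightarrow> W x \<in> carrier_vec (qdim n m)"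
    unfolding W_def using U 3(5) query_op_carrier by (metis mult_mat_vec_carrier)
  have UVc: "\<And>x. x \<in> cube n \<Longrightarrow> U *\<^sub>v V x \<in> carrier_vec (qdim n m)"
    using U 3(5) by (metis mult_mat_vec_carrier)
  have A: "\<And>r. r < qdim n m \<Longrightarrow> cpolyd n d (\<lambda>x. (U *\<^sub>v V x) $ r)"
    using step_U[OF U 3(5) 3(6)] by blast
  have Wp: "\<And>r. r < qdim n m \<Longrightarrow> cpolyd n (Suc d) (\<lambda>x. W x $ r)"
    unfolding W_def using step_O[OF UVc A] by blast
  have IH: "(\<forall>x\<in>cube n. qrun (query_op n m x) (U' # Us) (W x) \<in> carrier_vec (qdim n m)) \<and>
         (\<forall>r<qdim n m. cpolyd n (Suc d + length (U' # Us) - 1) (\<lambda>x. qrun (query_op n m x) (U' # Us) (W x) $ r))"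
    by (rule 3(2)) (use 3(3) Wc Wp in auto)
  then show ?case unfolding W_def by simp
qed

lemma quantum_to_poly:
  assumes qa: "quantum_alg_computes n X f T m Us Acc" and Xc: "X \<subseteq> cube n" and n: "n \<ge> 1"
  shows "\<exists>c. unbounded_poly n X f c \<and> mpoly_deg_le n c (2 * T)"
proof -
  have m: "m \<ge> 1" and len: "length Us = T + 1" and un: "\<forall>U\<in>set Us. unitary (qdim n m) U"
    and cor: "\<forall>x\<in>X. (f x \<longrightarrow> accept_prob n m x Us Acc > 1/2) \<and> (\<not> f x \<longrightarrow> 1 - accept_prob n m x Us Acc > 1/2)"
    using qa unfolding quantum_alg_computes_def by auto
  have N: "qdim n m > 0" using n m unfolding qdim_def by simp
  have car: "\<forall>U\<in>set Us. U \<in> carrier_mat (qdim n m) (qdim n m)" using un unfolding unitary_def by auto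
  have ne: "Us \<noteq> []" using len by auto
  define \<psi> where "\<psi> x = qrun (query_op n m x) Us (unit_vec (qdim n m) 0)" for x
  have Q: "\<forall>r<qdim n m. cpolyd n (0 + length Us - 1) (\<lambda>x. \<psi> x $ r)"
    using qrun_cpoly[OF car ne, of "\<lambda>x. unit_vec (qdim n m) 0" 0] cpolyd_const unfolding \<psi>_def by auto
  then have Q': "\<And>r. r < qdim n m \<Longrightarrow> cpolyd n T (\<lambda>x. \<psi> x $ r)" using len by simp
  have "polyd n (2 * T) (\<lambda>x. \<Sum>j\<in>Acc \<inter> {0..<qdim n m}. Re (\<psi> x $ j) * Re (\<psi> x $ j) + Im (\<psi> x $ j) * Im (\<psi> x $ j))"
    using Q' unfolding cpolyd_def mult_2 by (intro polyd_sum polyd_add polyd_mult) auto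
  then have "polyd n (2 * T) (\<lambda>x. accept_prob n m x Us Acc)"
    by (rule polyd_cong) (simp add: accept_prob_def \<psi>_def Let_def power2_eq_square cmod_sq)
  then obtain c where c: "mpoly_deg_le n c (2 * T)" "\<forall>x\<in>cube n. accept_prob n m x Us Acc = mpoly_eval n c x"
    unfolding polyd_def by blast
  have "unbounded_poly n X f c"
    unfolding unbounded_poly_def
  proof (intro conjI ballI impI)
    fix x assume "x \<in> cube n"
    then show "0 \<le> mpoly_eval n c x" "mpoly_eval n c x \<le> 1"
      using c(2) accept_prob_bounds[OF un N, of x Acc] by auto
  next
    fix x assume x: "x \<in> X" "f x"
    have e: "accept_prob n m x Us Acc = mpoly_eval n c x" using c(2) Xc x(1) by auto
    show "1/2 < mpoly_eval n c x" using cor x e by auto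
  next
    fix x assume x: "x \<in> X" "\<not> f x"
    have e: "accept_prob n m x Us Acc = mpoly_eval n c x" using c(2) Xc x(1) by auto
    show "mpoly_eval n c x < 1/2" using cor x e by auto
  qed
  with c(1) show ?thesis by blast
qed


lemma mult_mat_entry_vec:
  fixes A B :: "complex mat"
  assumes "A \<in> carrier_mat N N" "B \<in> carrier_mat N N" "r < N" "c < N"
  shows "(A * B) $$ (r, c) = (A *\<^sub>v (B *\<^sub>v unit_vec N c)) $ r"
proof -
  have "B *\<^sub>v unit_vec N c = col B c"
  proof (rule eq_vecI)
    fix i assume "i < dim_vec (col B c)"
    then have i: "i < N" using assms by simp
    have "(B *\<^sub>v unit_vec N c) $ i = (\<Sum>j<N. B $$ (i, j) * unit_vec N c $ j)"
      by (rule mat_vec_sum[OF assms(2) _ i]) simp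
    also have "\<dots> = (\<Sum>j<N. (if j = c then 1 else 0) * B $$ (i, j))"
      by (intro sum.cong) (auto simp: assms mult.commute)
    also have "\<dots> = B $$ (i, c)" using assms by (subst sum_delta1) auto
    finally show "(B *\<^sub>v unit_vec N c) $ i = col B c $ i" using i assms by simp
  qed (use assms in simp)
  then show ?thesis using assms by simp
qed

lemma unitary_from_vec:
  assumes A: "A \<in> carrier_mat N N" and B: "adjoint A \<in> carrier_mat N N"
    and inv: "\<And>u. u \<in> carrier_vec N \<Longrightarrow> adjoint A *\<^sub>v (A *\<^sub>v u) = u"
  shows "unitary N A"
  unfolding unitary_def
proof (intro conjI A eq_matI)
  fix r c assume rc: "r < dim_row (1\<^sub>m N)" "c < dim_col (1\<^sub>m N)"
  then have r: "r < N" and c: "c < N" by auto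
  have "(adjoint A * A) $$ (r, c) = (adjoint A *\<^sub>v (A *\<^sub>v unit_vec N c)) $ r"
    by (rule mult_mat_entry_vec[OF B A r c])
  also have "\<dots> = unit_vec N c $ r" using inv[of "unit_vec N c"] by simp
  finally show "(adjoint A * A) $$ (r, c) = 1\<^sub>m N $$ (r, c)" using r c by simp
qed (use A in \<open>auto simp: adjoint_def\<close>)

lemma adjoint_carrier: "A \<in> carrier_mat N N \<Longrightarrow> adjoint A \<in> carrier_mat N N"
  unfolding adjoint_def by auto

lemma adjoint_mult:
  assumes "A \<in> carrier_mat N N" "B \<in> carrier_mat N N"
  shows "adjoint (A * B) = adjoint B * adjoint A"
proof (rule eq_matI)
  fix i j assume "i < dim_row (adjoint B * adjoint A)" "j < dim_col (adjoint B * adjoint A)"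
  then have i: "i < N" and j: "j < N" using assms by (auto simp: adjoint_def)
  have "adjoint (A * B) $$ (i, j) = cnj (\<Sum>k<N. A $$ (j, k) * B $$ (k, i))"
    using assms i j by (simp add: adjoint_def scalar_prod_def atLeast0LessThan)
  also have "\<dots> = (\<Sum>k<N. cnj (B $$ (k, i)) * cnj (A $$ (j, k)))"
    by (simp add: cnj_sum mult.commute)
  also have "\<dots> = (adjoint B * adjoint A) $$ (i, j)"
    using assms i j by (simp add: adjoint_def scalar_prod_def atLeast0LessThan)
  finally show "adjoint (A * B) $$ (i, j) = (adjoint B * adjoint A) $$ (i, j)" .
qed (use assms in \<open>auto simp: adjoint_def\<close>)

lemma unitary_mult:
  assumes "unitary N A" "unitary N B"
  shows "unitary N (A * B)"
proof -
  have A: "A \<in> carrier_mat N N" and B: "B \<in> carrier_mat N N"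
    and eA: "adjoint A * A = 1\<^sub>m N" and eB: "adjoint B * B = 1\<^sub>m N"
    using assms unfolding unitary_def by auto
  have aA: "adjoint A \<in> carrier_mat N N" and aB: "adjoint B \<in> carrier_mat N N"
    using A B by (auto simp: adjoint_carrier)
  have "adjoint (A * B) * (A * B) = adjoint B * adjoint A * (A * B)"
    by (simp add: adjoint_mult[OF A B])
  also have "\<dots> = adjoint B * (adjoint A * A * B)"
    using A B aA aB by (simp add: assoc_mult_mat[of _ N N _ N _ N])
  also have "\<dots> = adjoint B * B" using eA B by simp
  also have "\<dots> = 1\<^sub>m N" by (rule eB)
  finally show ?thesis unfolding unitary_def using A B by auto
qed

lemma unitary_one: "unitary N (1\<^sub>m N)"
  unfolding unitary_def
proof (intro conjI)
  have "adjoint (1\<^sub>m N) = (1\<^sub>m N :: complex mat)"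
    by (rule eq_matI) (auto simp: adjoint_def)
  then show "adjoint (1\<^sub>m N) * 1\<^sub>m N = (1\<^sub>m N :: complex mat)" by simp
qed simp

definition perm_mat :: "nat \<Rightarrow> (nat \<Rightarrow> nat) \<Rightarrow> complex mat" where
  "perm_mat N \<pi> = mat N N (\<lambda>(r, c). if c = \<pi> r then 1 else 0)"

lemma perm_mat_carrier: "perm_mat N \<pi> \<in> carrier_mat N N"
  unfolding perm_mat_def by simp

lemma perm_mat_vec:
  assumes "bij_betw \<pi> {0..<N} {0..<N}" "v \<in> carrier_vec N" "r < N"
  shows "(perm_mat N \<pi> *\<^sub>v v) $ r = v $ \<pi> r"
proof -
  have "\<pi> r < N" using assms(1,3) bij_betwE by fastforce
  have "(perm_mat N \<pi> *\<^sub>v v) $ r = (\<Sum>c<N. perm_mat N \<pi> $$ (r, c) * v $ c)"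
    by (rule mat_vec_sum[OF perm_mat_carrier assms(2,3)])
  also have "\<dots> = (\<Sum>c<N. (if c = \<pi> r then 1 else 0) * v $ c)"
    by (intro sum.cong) (auto simp: perm_mat_def assms(3))
  also have "\<dots> = v $ \<pi> r" using \<open>\<pi> r < N\<close> by (subst sum_delta1) auto
  finally show ?thesis .
qed

lemma perm_mat_unitary:
  assumes bij: "bij_betw \<pi> {0..<N} {0..<N}"
  shows "unitary N (perm_mat N \<pi>)"
proof (rule unitary_from_vec[OF perm_mat_carrier adjoint_carrier[OF perm_mat_carrier]])
  define \<rho> where "\<rho> = the_inv_into {0..<N} \<pi>"
  have rb: "bij_betw \<rho> {0..<N} {0..<N}" unfolding \<rho>_def by (rule bij_betw_the_inv_into[OF bij])
  have pr: "\<pi> (\<rho> r) = r" if "r < N" for r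
    unfolding \<rho>_def using f_the_inv_into_f_bij_betw[OF bij] that by simp
  have rp: "\<rho> (\<pi> r) = r" if "r < N" for r
    unfolding \<rho>_def using the_inv_into_f_f[OF bij_betw_imp_inj_on[OF bij]] that by simp
  have rlt: "\<rho> r < N" if "r < N" for r using rb that bij_betwE by fastforce
  have adj: "adjoint (perm_mat N \<pi>) = perm_mat N \<rho>"
  proof (rule eq_matI)
    fix i j assume "i < dim_row (perm_mat N \<rho>)" "j < dim_col (perm_mat N \<rho>)"
    then have i: "i < N" and j: "j < N" by (auto simp: perm_mat_def)
    have "(i = \<pi> j) = (j = \<rho> i)" using pr[OF i] rp[OF j] by metis
    then show "adjoint (perm_mat N \<pi>) $$ (i, j) = perm_mat N \<rho> $$ (i, j)"
      using i j by (simp add: adjoint_def perm_mat_def)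
  qed (auto simp: adjoint_def perm_mat_def)
  fix u :: "complex vec" assume u: "u \<in> carrier_vec N"
  show "adjoint (perm_mat N \<pi>) *\<^sub>v (perm_mat N \<pi> *\<^sub>v u) = u"
  proof (rule eq_vecI)
    fix r assume "r < dim_vec u"
    then have r: "r < N" using u by simp
    have pu: "perm_mat N \<pi> *\<^sub>v u \<in> carrier_vec N" using perm_mat_carrier u by (metis mult_mat_vec_carrier)
    show "(adjoint (perm_mat N \<pi>) *\<^sub>v (perm_mat N \<pi> *\<^sub>v u)) $ r = u $ r"
      unfolding adj using perm_mat_vec[OF rb pu r] perm_mat_vec[OF bij u rlt[OF r]] pr[OF r] by simp
  qed (use u in \<open>simp add: adj perm_mat_def adjoint_def\<close>)
qed


definition wmat :: "nat \<Rightarrow> nat \<Rightarrow> complex mat" where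
  "wmat n m = mat (qdim n m) (qdim n m) (\<lambda>(r, c). if ri m r = ri m c \<and> rz m r = rz m c
      then (if rb m r \<and> rb m c then -1 else 1) / complex_of_real (sqrt 2) else 0)"

definition dvec :: "nat \<Rightarrow> nat \<Rightarrow> bool list \<Rightarrow> complex vec \<Rightarrow> complex vec" where
  "dvec n m x u = vec (qdim n m) (\<lambda>r. (if rb m r \<and> x ! ri m r then -1 else 1) * u $ r)"

lemma wmat_carrier: "wmat n m \<in> carrier_mat (qdim n m) (qdim n m)"
  unfolding wmat_def by simp

lemma wmat_dim[simp]: "dim_row (wmat n m) = qdim n m" "dim_col (wmat n m) = qdim n m"
  by (simp_all add: wmat_def)

lemma dvec_carrier: "dvec n m x u \<in> carrier_vec (qdim n m)"
  unfolding dvec_def by simp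

lemma dvec_index: "r < qdim n m \<Longrightarrow> dvec n m x u $ r = (if rb m r \<and> x ! ri m r then -1 else 1) * u $ r"
  unfolding dvec_def by simp

lemma sqrt2c: "complex_of_real (sqrt 2) * complex_of_real (sqrt 2) = 2"
proof -
  have "complex_of_real (sqrt 2) * complex_of_real (sqrt 2) = complex_of_real (sqrt 2 * sqrt 2)"
    by (rule of_real_mult[symmetric])
  also have "\<dots> = complex_of_real 2" by simp
  also have "\<dots> = 2" by simp
  finally show ?thesis .
qed

lemma h2a: "s * s = 2 \<Longrightarrow> ((a + b) / s + (a - b) / s) / s = (a::complex)"
proof -
  assume h: "s * s = 2"
  then have "s \<noteq> 0" by auto
  have "((a + b) / s + (a - b) / s) / s = (2 * a) / (s * s)"
    by (simp add: add_divide_distrib[symmetric] divide_divide_eq_left)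
  then show ?thesis using h by simp
qed

lemma h2b: "s * s = 2 \<Longrightarrow> ((a + b) / s + (-1) * ((a - b) / s)) / s = (b::complex)"
proof -
  assume h: "s * s = 2"
  have "((a + b) / s + (-1) * ((a - b) / s)) / s = (2 * b) / (s * s)"
    by (simp add: add_divide_distrib[symmetric] diff_divide_distrib[symmetric] divide_divide_eq_left)
  then show ?thesis using h by simp
qed

lemma wmat_vec:
  assumes u: "u \<in> carrier_vec (qdim n m)" and r: "r < qdim n m"
  shows "(wmat n m *\<^sub>v u) $ r = (u $ qidx m (ri m r) False (rz m r)
            + (if rb m r then -1 else 1) * u $ qidx m (ri m r) True (rz m r)) / complex_of_real (sqrt 2)"
proof -
  define i where "i = ri m r"
  define z where "z = rz m r"
  define c0 where "c0 = qidx m i False z"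
  define c1 where "c1 = qidx m i True z"
  have i: "i < n" and z: "z < m" using qidx_surj[OF r] unfolding i_def z_def by auto
  have c0: "c0 < qdim n m" and c1: "c1 < qdim n m" unfolding c0_def c1_def using qidx_lt[OF i z] by auto
  have c01: "c0 \<noteq> c1" unfolding c0_def c1_def using qidx_inj[OF z z] by simp
  let ?g = "\<lambda>c. wmat n m $$ (r, c) * u $ c"
  have "(wmat n m *\<^sub>v u) $ r = (\<Sum>c<qdim n m. ?g c)"
    by (rule mat_vec_sum[OF wmat_carrier u r])
  also have "\<dots> = (\<Sum>c\<in>{c0, c1}. ?g c)"
  proof (rule sum.mono_neutral_right)
    show "\<forall>c\<in>{..<qdim n m} - {c0, c1}. ?g c = 0"
    proof
      fix c assume c: "c \<in> {..<qdim n m} - {c0, c1}"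
      then have cl: "c < qdim n m" by simp
      have "\<not> (ri m r = ri m c \<and> rz m r = rz m c)"
      proof
        assume h: "ri m r = ri m c \<and> rz m r = rz m c"
        have "c = qidx m i (rb m c) z" using qidx_surj(1)[OF cl] h unfolding i_def z_def by simp
        then have "c \<in> {c0, c1}" unfolding c0_def c1_def by (cases "rb m c") auto
        then show False using c by simp
      qed
      then show "?g c = 0" unfolding wmat_def using r cl by auto
    qed
  qed (use c0 c1 in auto)
  also have "\<dots> = ?g c0 + ?g c1" using c01 by simp
  also have "\<dots> = (u $ c0 + (if rb m r then -1 else 1) * u $ c1) / complex_of_real (sqrt 2)"
    unfolding wmat_def using r c0 c1 qidx_decode[OF z]
    by (simp add: c0_def c1_def i_def z_def add_divide_distrib[symmetric])
  finally show ?thesis unfolding c0_def c1_def i_def z_def .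
qed

lemma wmat_vec_carrier: "u \<in> carrier_vec (qdim n m) \<Longrightarrow> wmat n m *\<^sub>v u \<in> carrier_vec (qdim n m)"
  using wmat_carrier by (metis mult_mat_vec_carrier)

lemma wmat_Ox:
  assumes u: "u \<in> carrier_vec (qdim n m)"
  shows "query_op n m x *\<^sub>v (wmat n m *\<^sub>v u) = wmat n m *\<^sub>v dvec n m x u"
proof (rule eq_vecI)
  fix r assume "r < dim_vec (wmat n m *\<^sub>v dvec n m x u)"
  then have r: "r < qdim n m" using wmat_carrier by simp
  define i where "i = ri m r"
  define b where "b = rb m r"
  define z where "z = rz m r"
  have i: "i < n" and z: "z < m" using qidx_surj[OF r] unfolding i_def z_def by auto
  have c: "qidx m i bb z < qdim n m" for bb using qidx_lt[OF i z] .
  have s: "qsig m x r < qdim n m" by (rule qsig_lt[OF r])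
  have sd: "ri m (qsig m x r) = i" "rb m (qsig m x r) = (b \<noteq> x ! i)" "rz m (qsig m x r) = z"
    unfolding qsig_def qidx_decode[OF qidx_surj(3)[OF r]] i_def b_def z_def by simp_all
  have "(query_op n m x *\<^sub>v (wmat n m *\<^sub>v u)) $ r = (wmat n m *\<^sub>v u) $ qsig m x r"
    by (rule query_op_vec[OF wmat_vec_carrier[OF u] r])
  also have "\<dots> = (u $ qidx m i False z + (if b \<noteq> x ! i then -1 else 1) * u $ qidx m i True z) / complex_of_real (sqrt 2)"
    unfolding wmat_vec[OF u s] sd ..
  also have "\<dots> = (dvec n m x u $ qidx m i False z + (if b then -1 else 1) * dvec n m x u $ qidx m i True z) / complex_of_real (sqrt 2)"
    unfolding dvec_index[OF c] qidx_decode[OF z] by (cases b; cases "x ! i") simp_all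
  also have "\<dots> = (wmat n m *\<^sub>v dvec n m x u) $ r"
    unfolding wmat_vec[OF dvec_carrier r] i_def b_def z_def ..
  finally show "(query_op n m x *\<^sub>v (wmat n m *\<^sub>v u)) $ r = (wmat n m *\<^sub>v dvec n m x u) $ r" .
qed (simp add: query_op_def)

lemma wmat_inv:
  assumes u: "u \<in> carrier_vec (qdim n m)"
  shows "wmat n m *\<^sub>v (wmat n m *\<^sub>v u) = u"
proof (rule eq_vecI)
  fix r assume "r < dim_vec u"
  then have r: "r < qdim n m" using u by simp
  define i where "i = ri m r"
  define b where "b = rb m r"
  define z where "z = rz m r"
  have i: "i < n" and z: "z < m" using qidx_surj[OF r] unfolding i_def z_def by auto
  have c: "qidx m i bb z < qdim n m" for bb using qidx_lt[OF i z] .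
  have re: "r = qidx m i b z" using qidx_surj(1)[OF r] unfolding i_def b_def z_def .
  have "(wmat n m *\<^sub>v (wmat n m *\<^sub>v u)) $ r =
      ((wmat n m *\<^sub>v u) $ qidx m i False z + (if b then -1 else 1) * (wmat n m *\<^sub>v u) $ qidx m i True z) / complex_of_real (sqrt 2)"
    unfolding wmat_vec[OF wmat_vec_carrier[OF u] r] i_def b_def z_def ..
  also have "\<dots> = ((u $ qidx m i False z + u $ qidx m i True z) / complex_of_real (sqrt 2)
      + (if b then -1 else 1) * ((u $ qidx m i False z - u $ qidx m i True z) / complex_of_real (sqrt 2))) / complex_of_real (sqrt 2)"
    unfolding wmat_vec[OF u c] qidx_decode[OF z] by simp
  also have "\<dots> = u $ r"
  proof (cases b)
    case True then show ?thesis using h2b[OF sqrt2c] re by simp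
  next
    case False then show ?thesis using h2a[OF sqrt2c] re by simp
  qed
  finally show "(wmat n m *\<^sub>v (wmat n m *\<^sub>v u)) $ r = u $ r" .
qed (use u in simp)

lemma wmat_adjoint: "adjoint (wmat n m) = wmat n m"
  by (rule eq_matI) (auto simp: adjoint_def wmat_def)

lemma wmat_unitary: "unitary (qdim n m) (wmat n m)"
  by (rule unitary_from_vec[OF wmat_carrier]) (auto simp: wmat_adjoint wmat_carrier wmat_inv)


definition hw :: "(nat \<Rightarrow> real) \<Rightarrow> nat \<Rightarrow> real" where
  "hw g r = (if r = 0 then 1 else 0) - g r"

definition hcc :: "nat \<Rightarrow> (nat \<Rightarrow> real) \<Rightarrow> real" where
  "hcc N g = (\<Sum>r<N. (hw g r)\<^sup>2)"

definition hh :: "nat \<Rightarrow> (nat \<Rightarrow> real) \<Rightarrow> complex mat" where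
  "hh N g = mat N N (\<lambda>(r, c). complex_of_real ((if r = c then 1 else 0) - 2 * hw g r * hw g c / hcc N g))"

lemma hh_carrier: "hh N g \<in> carrier_mat N N" unfolding hh_def by simp

lemma hh_dim[simp]: "dim_row (hh N g) = N" "dim_col (hh N g) = N" unfolding hh_def by simp_all

definition hS :: "nat \<Rightarrow> (nat \<Rightarrow> real) \<Rightarrow> complex vec \<Rightarrow> complex" where
  "hS N g u = (\<Sum>c<N. complex_of_real (hw g c) * u $ c)"

lemma hh_vec:
  assumes u: "u \<in> carrier_vec N" and r: "r < N"
  shows "(hh N g *\<^sub>v u) $ r = u $ r - complex_of_real (2 * hw g r / hcc N g) * hS N g u"
proof -
  have "(hh N g *\<^sub>v u) $ r = (\<Sum>c<N. hh N g $$ (r, c) * u $ c)" by (rule mat_vec_sum[OF hh_carrier u r])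
  also have "\<dots> = (\<Sum>c<N. (if c = r then 1 else 0) * u $ c - complex_of_real (2 * hw g r / hcc N g) * (complex_of_real (hw g c) * u $ c))"
    by (intro sum.cong refl) (auto simp: hh_def r algebra_simps)
  also have "\<dots> = u $ r - complex_of_real (2 * hw g r / hcc N g) * hS N g u"
    unfolding sum_subtractf hS_def sum_distrib_left[symmetric] using r by (subst sum_delta1) auto
  finally show ?thesis .
qed

lemma hh_vec_carrier: "u \<in> carrier_vec N \<Longrightarrow> hh N g *\<^sub>v u \<in> carrier_vec N"
  using hh_carrier by (metis mult_mat_vec_carrier)

lemma hS_hh:
  assumes u: "u \<in> carrier_vec N" and cc: "hcc N g \<noteq> 0"
  shows "hS N g (hh N g *\<^sub>v u) = - hS N g u"
proof -
  have "hS N g (hh N g *\<^sub>v u) = (\<Sum>c<N. complex_of_real (hw g c) * (u $ c - complex_of_real (2 * hw g c / hcc N g) * hS N g u))"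
    unfolding hS_def by (intro sum.cong refl) (simp del: index_mult_mat_vec add: hh_vec[OF u] hS_def)
  also have "\<dots> = hS N g u - complex_of_real (2 / hcc N g) * (\<Sum>c<N. complex_of_real ((hw g c)\<^sup>2)) * hS N g u"
    unfolding hS_def right_diff_distrib sum_subtractf
    by (simp add: sum_distrib_left sum_distrib_right power2_eq_square mult_ac)
  also have "(\<Sum>c<N. complex_of_real ((hw g c)\<^sup>2)) = complex_of_real (hcc N g)"
    unfolding hcc_def by simp
  also have "complex_of_real (2 / hcc N g) * complex_of_real (hcc N g) = 2"
    using cc by (simp flip: of_real_mult)
  finally show ?thesis by simp
qed

lemma hh_inv:
  assumes u: "u \<in> carrier_vec N"
  shows "hh N g *\<^sub>v (hh N g *\<^sub>v u) = u"
proof (rule eq_vecI)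
  fix r assume "r < dim_vec u"
  then have r: "r < N" using u by simp
  show "(hh N g *\<^sub>v (hh N g *\<^sub>v u)) $ r = u $ r"
  proof (cases "hcc N g = 0")
    case True
    then show ?thesis using hh_vec[OF hh_vec_carrier[OF u] r] hh_vec[OF u r] by simp
  next
    case False
    then show ?thesis using hh_vec[OF hh_vec_carrier[OF u] r] hh_vec[OF u r] hS_hh[OF u False] by simp
  qed
qed (use u in simp)

lemma hh_adjoint: "adjoint (hh N g) = hh N g"
  by (rule eq_matI) (auto simp: adjoint_def hh_def mult_ac)

lemma hh_unitary: "unitary N (hh N g)"
  by (rule unitary_from_vec[OF hh_carrier]) (auto simp: hh_adjoint hh_carrier hh_inv)

lemma hh_e0:
  assumes N: "N > 0" and g: "(\<Sum>r<N. (g r)\<^sup>2) = 1" and r: "r < N"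
  shows "(hh N g *\<^sub>v unit_vec N 0) $ r = complex_of_real (g r)"
proof -
  have "hS N g (unit_vec N 0) = (\<Sum>c<N. (if c = 0 then 1 else 0) * complex_of_real (hw g c))"
    unfolding hS_def by (intro sum.cong refl) (auto simp: N)
  also have "\<dots> = complex_of_real (hw g 0)" using N by (subst sum_delta1) auto
  finally have S: "hS N g (unit_vec N 0) = complex_of_real (hw g 0)" .
  have e: "(hh N g *\<^sub>v unit_vec N 0) $ r = complex_of_real ((if r = 0 then 1 else 0) - 2 * hw g r / hcc N g * hw g 0)"
    using hh_vec[of "unit_vec N 0" N r g] r S by simp
  show ?thesis
  proof (cases "hcc N g = 0")
    case True
    then have "\<forall>c\<in>{..<N}. (hw g c)\<^sup>2 = 0" unfolding hcc_def using sum_nonneg_eq_0_iff[of "{..<N}" "\<lambda>c. (hw g c)\<^sup>2"] by simp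
    then have "hw g r = 0" using r by simp
    then show ?thesis using e True unfolding hw_def by simp
  next
    case False
    have "hcc N g = (\<Sum>c<N. (if c = 0 then 1 else 0) * (1 - 2 * g c) + (g c)\<^sup>2)"
      unfolding hcc_def hw_def by (intro sum.cong refl) (auto simp: power2_eq_square algebra_simps)
    also have "\<dots> = (1 - 2 * g 0) + 1" unfolding sum.distrib g using N by (subst sum_delta1) auto
    finally have cc: "hcc N g = 2 * hw g 0" unfolding hw_def by simp
    then have "hw g 0 \<noteq> 0" using False by simp
    then have "2 * hw g r / hcc N g * hw g 0 = hw g r" unfolding cc by simp
    then show ?thesis using e unfolding hw_def by simp
  qed
qed

fun drun :: "(complex vec \<Rightarrow> complex vec) \<Rightarrow> complex mat list \<Rightarrow> complex vec \<Rightarrow> complex vec" where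
  "drun D [] u = u"
| "drun D [P] u = P *\<^sub>v u"
| "drun D (P # Q # Ps) u = drun D (Q # Ps) (D (P *\<^sub>v u))"


lemma ext_perm:
  fixes N :: nat and F G :: "'b \<Rightarrow> nat"
  assumes fin: "finite B" and iF: "inj_on F B" and iG: "inj_on G B"
    and sF: "F ` B \<subseteq> {0..<N}" and sG: "G ` B \<subseteq> {0..<N}"
  shows "\<exists>\<pi>. bij_betw \<pi> {0..<N} {0..<N} \<and> (\<forall>\<beta>\<in>B. \<pi> (G \<beta>) = F \<beta>)"
proof -
  define h1 where "h1 = F \<circ> the_inv_into B G"
  have b1: "bij_betw h1 (G ` B) (F ` B)"
  proof -
    have "bij_betw (the_inv_into B G) (G ` B) B" by (rule bij_betw_the_inv_into) (simp add: bij_betw_imageI iG)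
    moreover have "bij_betw F B (F ` B)" by (simp add: bij_betw_imageI iF)
    ultimately show ?thesis unfolding h1_def by (rule bij_betw_trans)
  qed
  have c: "card ({0..<N} - G ` B) = card ({0..<N} - F ` B)"
    using sF sG card_image[OF iF] card_image[OF iG] fin by (simp add: card_Diff_subset finite_subset)
  have fC: "finite ({0..<N} - G ` B)" "finite ({0..<N} - F ` B)" by auto
  obtain h2 where b2: "bij_betw h2 ({0..<N} - G ` B) ({0..<N} - F ` B)"
    using finite_same_card_bij[OF fC c] by auto
  define \<pi> where "\<pi> r = (if r \<in> G ` B then h1 r else h2 r)" for r
  have "bij_betw \<pi> (G ` B \<union> ({0..<N} - G ` B)) (F ` B \<union> ({0..<N} - F ` B))"
  proof (rule bij_betw_combine)
    show "bij_betw \<pi> (G ` B) (F ` B)" using b1 by (rule bij_betw_cong[THEN iffD1, rotated]) (simp add: \<pi>_def)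
    show "bij_betw \<pi> ({0..<N} - G ` B) ({0..<N} - F ` B)" using b2 by (rule bij_betw_cong[THEN iffD1, rotated]) (simp add: \<pi>_def)
  qed auto
  moreover have "G ` B \<union> ({0..<N} - G ` B) = {0..<N}" "F ` B \<union> ({0..<N} - F ` B) = {0..<N}" using sF sG by auto
  ultimately have "bij_betw \<pi> {0..<N} {0..<N}" by simp
  moreover have "\<forall>\<beta>\<in>B. \<pi> (G \<beta>) = F \<beta>"
    unfolding \<pi>_def h1_def using the_inv_into_f_f[OF iG] by simp
  ultimately show ?thesis by blast
qed

lemma dsum_sq:
  assumes "finite B" "inj_on p B"
  shows "(\<Sum>\<beta>\<in>B. if r = p \<beta> then h \<beta> else (0::real))\<^sup>2 = (\<Sum>\<beta>\<in>B. if r = p \<beta> then (h \<beta>)\<^sup>2 else 0)"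
proof (cases "\<exists>\<beta>\<in>B. r = p \<beta>")
  case True
  then obtain \<beta>0 where b: "\<beta>0 \<in> B" "r = p \<beta>0" by blast
  have "(\<Sum>\<beta>\<in>B. if r = p \<beta> then g \<beta> else (0::real)) = g \<beta>0" for g
  proof -
    have "(\<Sum>\<beta>\<in>B. if r = p \<beta> then g \<beta> else 0) = (\<Sum>\<beta>\<in>B. if \<beta> = \<beta>0 then g \<beta> else 0)"
      using b assms(2) by (intro sum.cong refl) (auto dest: inj_onD)
    then show ?thesis using b assms(1) by simp
  qed
  then show ?thesis by simp
next
  case False
  then show ?thesis by (auto intro!: sum.neutral)
qed

lemma dsum_total:
  fixes N :: nat and p :: "'b \<Rightarrow> nat"
  assumes "finite B" "p ` B \<subseteq> {..<N}"
  shows "(\<Sum>r<N. \<Sum>\<beta>\<in>B. if r = p \<beta> then h \<beta> else (0::real)) = (\<Sum>\<beta>\<in>B. h \<beta>)"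
proof -
  have "(\<Sum>r<N. \<Sum>\<beta>\<in>B. if r = p \<beta> then h \<beta> else (0::real)) = (\<Sum>\<beta>\<in>B. \<Sum>r<N. if r = p \<beta> then h \<beta> else 0)"
    by (rule sum.swap)
  also have "\<dots> = (\<Sum>\<beta>\<in>B. h \<beta>)"
  proof (intro sum.cong refl)
    fix \<beta> assume "\<beta> \<in> B"
    then have "p \<beta> \<in> {..<N}" using assms(2) by auto
    then show "(\<Sum>r<N. if r = p \<beta> then h \<beta> else 0) = h \<beta>"
      using sum.delta[of "{..<N}" "p \<beta>" "\<lambda>_. h \<beta>"] by simp
  qed
  finally show ?thesis .
qed

lemma dsum_at:
  assumes "finite B" "inj_on p B" "\<beta>0 \<in> B"
  shows "(\<Sum>\<beta>\<in>B. if p \<beta>0 = p \<beta> then h \<beta> else (0::real)) = h \<beta>0"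
proof -
  have "(\<Sum>\<beta>\<in>B. if p \<beta>0 = p \<beta> then h \<beta> else 0) = (\<Sum>\<beta>\<in>B. if \<beta> = \<beta>0 then h \<beta> else 0)"
    using assms(2,3) by (intro sum.cong refl) (auto dest: inj_onD)
  then show ?thesis using assms(1,3) by simp
qed

locale qc =
  fixes n k :: nat and a :: "nat set \<Rightarrow> real" and e :: "nat \<Rightarrow> nat set" and M :: nat
  assumes n1: "n \<ge> 1" and k1: "k \<ge> 1" and ebij: "bij_betw e {0..<M} (Pow {0..<n})"
    and deg: "\<forall>S\<in>Pow {0..<n}. a S \<noteq> 0 \<longrightarrow> card S \<le> 2 * k"
    and Apos: "(\<Sum>S\<in>Pow {0..<n}. \<bar>a S\<bar>) > 0"
begin

definition mm :: nat where "mm = 2 * M"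
definition NN :: nat where "NN = qdim n mm"
definition AA :: real where "AA = (\<Sum>S\<in>Pow {0..<n}. \<bar>a S\<bar>)"
definition lst :: "nat \<Rightarrow> nat list" where "lst j = sorted_list_of_set (e j)"
definition qs :: "nat \<Rightarrow> bool \<Rightarrow> nat list" where "qs j s = take k (if s then drop k (lst j) else lst j)"
definition zz :: "nat \<Rightarrow> bool \<Rightarrow> nat" where "zz j s = 2 * j + (if s then 1 else 0)"
definition BB :: "(nat \<times> bool) set" where "BB = {0..<M} \<times> (UNIV :: bool set)"
definition pos :: "nat \<times> bool \<Rightarrow> nat \<Rightarrow> nat" where "pos \<beta> t = (if t < k then (if t < length (qs (fst \<beta>) (snd \<beta>))
      then qidx mm (qs (fst \<beta>) (snd \<beta>) ! t) True (zz (fst \<beta>) (snd \<beta>))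
      else qidx mm 0 False (zz (fst \<beta>) (snd \<beta>))) else qidx mm 0 (snd \<beta>) (2 * fst \<beta>))"
definition gam :: "nat \<times> bool \<Rightarrow> real" where "gam \<beta> = (if snd \<beta> then sgn (a (e (fst \<beta>))) else 1) * sqrt (\<bar>a (e (fst \<beta>))\<bar> / (2 * AA))"

lemma M1: "M \<ge> 1"
proof -
  have "card {0..<M} = card (Pow {0..<n})" by (rule bij_betw_same_card[OF ebij])
  then have "M = 2 ^ n" by (simp add: card_Pow)
  then show ?thesis by simp
qed

lemma mm1: "mm \<ge> 1" unfolding mm_def using M1 by simp

lemma finBB: "finite BB" unfolding BB_def by simp

lemma e_sub: "j < M \<Longrightarrow> e j \<subseteq> {0..<n}" using ebij bij_betwE by fastforce

lemma e_fin: "j < M \<Longrightarrow> finite (e j)" using e_sub finite_subset by blast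

lemma qs_lt: "j < M \<Longrightarrow> i \<in> set (qs j s) \<Longrightarrow> i < n"
proof -
  assume j: "j < M" and i: "i \<in> set (qs j s)"
  have "set (qs j s) \<subseteq> set (lst j)" unfolding qs_def by (auto dest: in_set_takeD in_set_dropD)
  then show "i < n" using i e_sub[OF j] e_fin[OF j] unfolding lst_def by auto
qed

lemma zz_lt: "j < M \<Longrightarrow> zz j s < mm" unfolding zz_def mm_def by auto

lemma zz_inj: "zz j s = zz j' s' \<Longrightarrow> j = j' \<and> s = s'" unfolding zz_def by (cases s; cases s') presburger+

lemma pos_lt: "\<beta> \<in> BB \<Longrightarrow> pos \<beta> t < NN"
proof -
  assume b: "\<beta> \<in> BB"
  then have j: "fst \<beta> < M" unfolding BB_def by auto
  have n0: "0 < n" using n1 by simp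
  have z2: "2 * fst \<beta> < mm" using j unfolding mm_def by simp
  have i: "t < length (qs (fst \<beta>) (snd \<beta>)) \<Longrightarrow> qs (fst \<beta>) (snd \<beta>) ! t < n"
    using qs_lt[OF j] nth_mem by blast
  show ?thesis unfolding pos_def NN_def
    using qidx_lt[OF i zz_lt[OF j]] qidx_lt[OF n0 zz_lt[OF j]] qidx_lt[OF n0 z2] by auto
qed

lemma pos_decode:
  assumes b: "\<beta> \<in> BB" and t: "t < k"
  shows "ri mm (pos \<beta> t) = (if t < length (qs (fst \<beta>) (snd \<beta>)) then qs (fst \<beta>) (snd \<beta>) ! t else 0)"
    "rb mm (pos \<beta> t) = (t < length (qs (fst \<beta>) (snd \<beta>)))"
    "rz mm (pos \<beta> t) = zz (fst \<beta>) (snd \<beta>)"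
proof -
  have j: "fst \<beta> < M" using b unfolding BB_def by auto
  note d = qidx_decode[OF zz_lt[OF j]]
  show "ri mm (pos \<beta> t) = (if t < length (qs (fst \<beta>) (snd \<beta>)) then qs (fst \<beta>) (snd \<beta>) ! t else 0)"
    unfolding pos_def using t d by simp
  show "rb mm (pos \<beta> t) = (t < length (qs (fst \<beta>) (snd \<beta>)))"
    unfolding pos_def using t d by simp
  show "rz mm (pos \<beta> t) = zz (fst \<beta>) (snd \<beta>)"
    unfolding pos_def using t d by simp
qed

lemma pos_final: "pos \<beta> k = qidx mm 0 (snd \<beta>) (2 * fst \<beta>)" unfolding pos_def by simp

lemma pos_inj: "t \<le> k \<Longrightarrow> inj_on (\<lambda>\<beta>. pos \<beta> t) BB"
proof (rule inj_onI)
  fix \<beta> \<beta>' assume t: "t \<le> k" and b: "\<beta> \<in> BB" "\<beta>' \<in> BB" and eq: "pos \<beta> t = pos \<beta>' t"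
  have j: "fst \<beta> < M" "fst \<beta>' < M" using b unfolding BB_def by auto
  show "\<beta> = \<beta>'"
  proof (cases "t < k")
    case True
    have "zz (fst \<beta>) (snd \<beta>) = zz (fst \<beta>') (snd \<beta>')"
      using pos_decode(3)[OF b(1) True] pos_decode(3)[OF b(2) True] eq by simp
    then show ?thesis using zz_inj by (simp add: prod_eq_iff)
  next
    case False
    then have tk: "t = k" using t by simp
    have z: "2 * fst \<beta> < mm" "2 * fst \<beta>' < mm" using j unfolding mm_def by auto
    have "snd \<beta> = snd \<beta>' \<and> 2 * fst \<beta> = 2 * fst \<beta>'"
      using eq unfolding tk pos_final qidx_inj[OF z] by simp
    then show ?thesis by (simp add: prod_eq_iff)
  qed
qed

lemma AA_pos: "AA > 0" unfolding AA_def using Apos .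

lemma sum_BB: "(\<Sum>\<beta>\<in>BB. h \<beta>) = (\<Sum>j<M. h (j, True) + h (j, False))"
proof -
  have "(\<Sum>j\<in>{0..<M}. \<Sum>s\<in>UNIV. h (j, s)) = (\<Sum>z\<in>{0..<M}\<times>UNIV. case z of (j, s) \<Rightarrow> h (j, s))"
    by (rule sum.cartesian_product)
  then show ?thesis unfolding BB_def by (simp add: UNIV_bool atLeast0LessThan add.commute)
qed

lemma sum_M: "(\<Sum>j<M. h (e j)) = (\<Sum>S\<in>Pow {0..<n}. h S)"
  using sum.reindex_bij_betw[OF ebij, of h] by (simp add: atLeast0LessThan)

lemma gam_norm: "(\<Sum>\<beta>\<in>BB. (gam \<beta>)\<^sup>2) = 1"
proof -
  have sq: "(sqrt (\<bar>a S\<bar> / (2 * AA)))\<^sup>2 = \<bar>a S\<bar> / (2 * AA)" for S using AA_pos by simp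
  have sg: "(sgn (a S))\<^sup>2 * \<bar>a S\<bar> = \<bar>a S\<bar>" for S by (cases "a S = 0") (auto simp: sgn_if)
  have sg': "\<bar>a S\<bar> * (sgn (a S))\<^sup>2 = \<bar>a S\<bar>" for S by (cases "a S = 0") (auto simp: sgn_if)
  have "(\<Sum>\<beta>\<in>BB. (gam \<beta>)\<^sup>2) = (\<Sum>j<M. \<bar>a (e j)\<bar> / AA)"
    unfolding sum_BB gam_def power_mult_distrib sq
    by (intro sum.cong refl) (simp add: sg sg' field_simps)
  also have "\<dots> = (\<Sum>S\<in>Pow {0..<n}. \<bar>a S\<bar>) / AA"
    using sum_M[of "\<lambda>S. \<bar>a S\<bar> / AA"] by (simp add: sum_divide_distrib)
  finally show ?thesis using AA_pos unfolding AA_def by simp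
qed

end


lemma WPW_vec:
  assumes P: "P \<in> carrier_mat (qdim n m) (qdim n m)" and v: "v \<in> carrier_vec (qdim n m)"
  shows "wmat n m * P * wmat n m *\<^sub>v v = wmat n m *\<^sub>v (P *\<^sub>v (wmat n m *\<^sub>v v))"
proof -
  have 1: "wmat n m * P \<in> carrier_mat (qdim n m) (qdim n m)" by (rule mult_carrier_mat[OF wmat_carrier P])
  have "wmat n m * P * wmat n m *\<^sub>v v = (wmat n m * P) *\<^sub>v (wmat n m *\<^sub>v v)"
    by (rule assoc_mult_mat_vec[OF 1 wmat_carrier v])
  also have "\<dots> = wmat n m *\<^sub>v (P *\<^sub>v (wmat n m *\<^sub>v v))"
    by (rule assoc_mult_mat_vec[OF wmat_carrier P wmat_vec_carrier[OF v]])
  finally show ?thesis .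
qed

lemma qrun_W:
  assumes "Ps \<noteq> []" "\<forall>P\<in>set Ps. P \<in> carrier_mat (qdim n m) (qdim n m)" "u \<in> carrier_vec (qdim n m)"
  shows "qrun (query_op n m x) (map (\<lambda>P. wmat n m * P * wmat n m) Ps) (wmat n m *\<^sub>v u)
       = wmat n m *\<^sub>v drun (dvec n m x) Ps u"
  using assms
proof (induction Ps arbitrary: u rule: induct_list012)
  case 1 then show ?case by simp
next
  case (2 P)
  have P: "P \<in> carrier_mat (qdim n m) (qdim n m)" using 2 by simp
  have "wmat n m * P * wmat n m *\<^sub>v (wmat n m *\<^sub>v u) = wmat n m *\<^sub>v (P *\<^sub>v (wmat n m *\<^sub>v (wmat n m *\<^sub>v u)))"
    by (rule WPW_vec[OF P wmat_vec_carrier[OF 2(3)]])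
  then show ?case using wmat_inv[OF 2(3)] by simp
next
  case (3 P Q Ps)
  have P: "P \<in> carrier_mat (qdim n m) (qdim n m)" using 3 by simp
  have Pu: "P *\<^sub>v u \<in> carrier_vec (qdim n m)" using P 3(5) by (metis mult_mat_vec_carrier)
  have "wmat n m * P * wmat n m *\<^sub>v (wmat n m *\<^sub>v u) = wmat n m *\<^sub>v (P *\<^sub>v (wmat n m *\<^sub>v (wmat n m *\<^sub>v u)))"
    by (rule WPW_vec[OF P wmat_vec_carrier[OF 3(5)]])
  also have "\<dots> = wmat n m *\<^sub>v (P *\<^sub>v u)" using wmat_inv[OF 3(5)] by simp
  finally have e: "wmat n m * P * wmat n m *\<^sub>v (wmat n m *\<^sub>v u) = wmat n m *\<^sub>v (P *\<^sub>v u)" .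
  have "qrun (query_op n m x) (map (\<lambda>P. wmat n m * P * wmat n m) (P # Q # Ps)) (wmat n m *\<^sub>v u)
      = qrun (query_op n m x) (map (\<lambda>P. wmat n m * P * wmat n m) (Q # Ps)) (wmat n m *\<^sub>v dvec n m x (P *\<^sub>v u))"
    using e wmat_Ox[OF Pu] by simp
  also have "\<dots> = wmat n m *\<^sub>v drun (dvec n m x) (Q # Ps) (dvec n m x (P *\<^sub>v u))"
    by (rule 3(2)) (use 3(4) dvec_carrier in auto)
  finally show ?case by simp
qed

context qc
begin

definition ph1 :: "bool list \<Rightarrow> nat \<Rightarrow> real" where
  "ph1 x r = (if rb mm r \<and> x ! ri mm r then -1 else 1)"

definition ph :: "bool list \<Rightarrow> nat \<times> bool \<Rightarrow> nat \<Rightarrow> real" where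
  "ph x \<beta> t = (\<Prod>t'<t. ph1 x (pos \<beta> t'))"

definition amp :: "bool list \<Rightarrow> nat \<Rightarrow> nat \<Rightarrow> real" where
  "amp x t r = (\<Sum>\<beta>\<in>BB. if r = pos \<beta> t then gam \<beta> * ph x \<beta> t else 0)"

definition svec :: "bool list \<Rightarrow> nat \<Rightarrow> complex vec" where
  "svec x t = vec NN (\<lambda>r. complex_of_real (amp x t r))"

definition g0 :: "nat \<Rightarrow> real" where
  "g0 r = (\<Sum>\<beta>\<in>BB. if r = pos \<beta> 0 then gam \<beta> else 0)"

definition piT :: "nat \<Rightarrow> nat \<Rightarrow> nat" where
  "piT t = (SOME \<pi>. bij_betw \<pi> {0..<NN} {0..<NN} \<and> (\<forall>\<beta>\<in>BB. \<pi> (pos \<beta> t) = pos \<beta> (t - 1)))"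

definition Pm :: "nat \<Rightarrow> complex mat" where
  "Pm t = perm_mat NN (piT t)"

lemma piT_prop:
  assumes "t \<le> k"
  shows "bij_betw (piT t) {0..<NN} {0..<NN} \<and> (\<forall>\<beta>\<in>BB. piT t (pos \<beta> t) = pos \<beta> (t - 1))"
proof -
  have "\<exists>\<pi>. bij_betw \<pi> {0..<NN} {0..<NN} \<and> (\<forall>\<beta>\<in>BB. \<pi> (pos \<beta> t) = pos \<beta> (t - 1))"
    by (rule ext_perm[OF finBB pos_inj pos_inj]) (use assms pos_lt in auto)
  then show ?thesis unfolding piT_def by (rule someI_ex)
qed

lemma qd: "qdim n mm = NN" unfolding NN_def ..

lemma ph0: "ph x \<beta> 0 = 1" unfolding ph_def by simp

lemma NN_pos: "NN > 0" unfolding NN_def qdim_def using n1 mm1 by simp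

lemma svec_carrier: "svec x t \<in> carrier_vec NN" unfolding svec_def by simp

lemma svec_step:
  assumes t: "t < k"
  shows "Pm (Suc t) *\<^sub>v dvec n mm x (svec x t) = svec x (Suc t)"
proof (rule eq_vecI)
  fix r assume "r < dim_vec (svec x (Suc t))"
  then have r: "r < NN" unfolding svec_def by simp
  have pp: "bij_betw (piT (Suc t)) {0..<NN} {0..<NN}" "\<forall>\<beta>\<in>BB. piT (Suc t) (pos \<beta> (Suc t)) = pos \<beta> t"
    using piT_prop[of "Suc t"] t by auto
  define r' where "r' = piT (Suc t) r"
  have r': "r' < NN" unfolding r'_def using pp(1) r bij_betwE by fastforce
  have dc: "dvec n mm x (svec x t) \<in> carrier_vec NN" unfolding NN_def by (rule dvec_carrier)
  have "(Pm (Suc t) *\<^sub>v dvec n mm x (svec x t)) $ r = dvec n mm x (svec x t) $ r'"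
    unfolding Pm_def r'_def by (rule perm_mat_vec[OF pp(1) dc r])
  also have "\<dots> = (if rb mm r' \<and> x ! ri mm r' then -1 else 1) * svec x t $ r'"
    by (rule dvec_index[of r' n mm, unfolded qd, OF r'])
  also have "\<dots> = complex_of_real (ph1 x r' * amp x t r')"
    using r' by (simp add: svec_def ph1_def)
  also have "ph1 x r' * amp x t r' = amp x (Suc t) r"
    unfolding amp_def sum_distrib_left
  proof (intro sum.cong refl)
    fix \<beta> assume b: "\<beta> \<in> BB"
    have iff: "r' = pos \<beta> t \<longleftrightarrow> r = pos \<beta> (Suc t)"
    proof
      assume "r = pos \<beta> (Suc t)" then show "r' = pos \<beta> t" unfolding r'_def using pp(2) b by simp
    next
      assume h: "r' = pos \<beta> t"
      have "piT (Suc t) r = piT (Suc t) (pos \<beta> (Suc t))" using h pp(2) b unfolding r'_def by simp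
      then show "r = pos \<beta> (Suc t)"
        using bij_betw_imp_inj_on[OF pp(1)] r pos_lt[OF b] by (auto dest: inj_onD)
    qed
    show "ph1 x r' * (if r' = pos \<beta> t then gam \<beta> * ph x \<beta> t else 0) =
          (if r = pos \<beta> (Suc t) then gam \<beta> * ph x \<beta> (Suc t) else 0)"
      using iff by (auto simp: ph_def)
  qed
  finally show "(Pm (Suc t) *\<^sub>v dvec n mm x (svec x t)) $ r = svec x (Suc t) $ r"
    using r unfolding svec_def by simp
qed (simp add: svec_def Pm_def perm_mat_def)

lemma g0_norm: "(\<Sum>r<NN. (g0 r)\<^sup>2) = 1"
proof -
  have "(\<Sum>r<NN. (g0 r)\<^sup>2) = (\<Sum>r<NN. \<Sum>\<beta>\<in>BB. if r = pos \<beta> 0 then (gam \<beta>)\<^sup>2 else 0)"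
    unfolding g0_def by (intro sum.cong refl dsum_sq finBB pos_inj) simp
  also have "\<dots> = (\<Sum>\<beta>\<in>BB. (gam \<beta>)\<^sup>2)" by (rule dsum_total[OF finBB]) (use pos_lt in auto)
  finally show ?thesis using gam_norm by simp
qed

lemma ph0': "ph x \<beta> 0 = 1"
  by (simp add: ph_def)

lemma amp0: "amp x 0 r = g0 r"
  unfolding amp_def g0_def ph0' mult_1_right ..

lemma svec0: "svec x 0 = hh NN g0 *\<^sub>v unit_vec NN 0"
proof (rule eq_vecI)
  fix r assume "r < dim_vec (hh NN g0 *\<^sub>v unit_vec NN 0)"
  then have r: "r < NN" by simp
  show "svec x 0 $ r = (hh NN g0 *\<^sub>v unit_vec NN 0) $ r"
    unfolding hh_e0[OF NN_pos g0_norm r] using r by (simp add: svec_def amp0)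
qed (simp add: svec_def)

lemma drun_svec:
  "t < k \<Longrightarrow> drun (dvec n mm x) (map Pm [Suc t..<Suc k]) (dvec n mm x (svec x t)) = svec x k"
proof (induction "k - Suc t" arbitrary: t)
  case 0
  then have "Suc t = k" by simp
  then show ?case using svec_step[OF 0(2)] by simp
next
  case (Suc d)
  have l: "[Suc t..<Suc k] = Suc t # [Suc (Suc t)..<Suc k]"
    by (rule upt_conv_Cons) (use Suc(3) in simp)
  have l2: "[Suc (Suc t)..<Suc k] = Suc (Suc t) # [Suc (Suc (Suc t))..<Suc k]"
    by (rule upt_conv_Cons) (use Suc(2,3) in simp)
  have "drun (dvec n mm x) (map Pm [Suc t..<Suc k]) (dvec n mm x (svec x t))
      = drun (dvec n mm x) (map Pm [Suc (Suc t)..<Suc k]) (dvec n mm x (svec x (Suc t)))"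
    unfolding l l2 list.map drun.simps using svec_step[OF Suc(3)] by (simp del: upt_Suc)
  also have "\<dots> = svec x k" using Suc(1)[of "Suc t"] Suc(2,3) by (simp del: upt_Suc)
  finally show ?case .
qed

definition Ulist :: "complex mat list" where
  "Ulist = (wmat n mm * hh NN g0) # map (\<lambda>t. wmat n mm * Pm t * wmat n mm) [1..<Suc k]"

lemma Ulist_len: "length Ulist = k + 1" unfolding Ulist_def by simp

lemma Ulist_unitary: "\<forall>U\<in>set Ulist. unitary (qdim n mm) U"
proof -
  have W: "unitary (qdim n mm) (wmat n mm)" by (rule wmat_unitary)
  have H: "unitary (qdim n mm) (hh NN g0)" unfolding NN_def by (rule hh_unitary)
  have P: "unitary (qdim n mm) (Pm t)" if "t \<in> set [1..<Suc k]" for t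
    unfolding Pm_def NN_def[symmetric] using piT_prop[of t] that NN_def perm_mat_unitary by auto
  show ?thesis unfolding Ulist_def using W H P by (auto intro!: unitary_mult)
qed

lemma qrun_Ulist: "qrun (query_op n mm x) Ulist (unit_vec NN 0) = wmat n mm *\<^sub>v svec x k"
proof -
  have Pc: "\<forall>P\<in>set (map Pm [1..<Suc k]). P \<in> carrier_mat (qdim n mm) (qdim n mm)"
    unfolding Pm_def NN_def by (auto simp: perm_mat_carrier)
  have ne: "map Pm [1..<Suc k] \<noteq> []" using k1 by simp
  have e0: "unit_vec NN 0 \<in> carrier_vec NN" by simp
  have h0: "hh NN g0 *\<^sub>v unit_vec NN 0 \<in> carrier_vec (qdim n mm)" unfolding qd by (rule hh_vec_carrier[OF e0])
  have "(wmat n mm * hh NN g0) *\<^sub>v unit_vec NN 0 = wmat n mm *\<^sub>v (hh NN g0 *\<^sub>v unit_vec NN 0)"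
    by (rule assoc_mult_mat_vec[OF wmat_carrier[of n mm, unfolded qd] hh_carrier e0])
  then have first: "query_op n mm x *\<^sub>v ((wmat n mm * hh NN g0) *\<^sub>v unit_vec NN 0) = wmat n mm *\<^sub>v dvec n mm x (svec x 0)"
    using wmat_Ox[OF h0] svec0 by simp
  have l: "[1..<Suc k] = Suc 0 # [Suc 1..<Suc k]" using k1 by (simp add: upt_conv_Cons)
  have "qrun (query_op n mm x) Ulist (unit_vec NN 0)
      = qrun (query_op n mm x) (map (\<lambda>P. wmat n mm * P * wmat n mm) (map Pm [1..<Suc k])) (wmat n mm *\<^sub>v dvec n mm x (svec x 0))"
    unfolding Ulist_def l list.map qrun.simps first map_map comp_def by (simp del: upt_Suc)
  also have "\<dots> = wmat n mm *\<^sub>v drun (dvec n mm x) (map Pm [1..<Suc k]) (dvec n mm x (svec x 0))"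
    by (rule qrun_W[OF ne Pc dvec_carrier])
  also have "drun (dvec n mm x) (map Pm [1..<Suc k]) (dvec n mm x (svec x 0)) = svec x k"
    using drun_svec[of 0] k1 by simp
  finally show ?thesis .
qed

end


definition chi :: "nat set \<Rightarrow> bool list \<Rightarrow> real" where
  "chi S x = (\<Prod>i\<in>S. 1 - 2 * bit (x ! i))"

lemma prod_pad:
  assumes "length xs \<le> k"
  shows "(\<Prod>t<k. if t < length xs then c (xs ! t) else (1::real)) = prod_list (map c xs)"
proof -
  have "(\<Prod>t<k. if t < length xs then c (xs ! t) else 1) = (\<Prod>t<length xs. if t < length xs then c (xs ! t) else 1)"
    by (rule prod.mono_neutral_right) (use assms in auto)
  also have "\<dots> = (\<Prod>t<length xs. c (xs ! t))" by (rule prod.cong) auto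
  also have "\<dots> = prod_list (map c xs)"
    by (simp add: prod.list_conv_set_nth atLeast0LessThan)
  finally show ?thesis .
qed

lemma prod_list_pm1: "(\<forall>y\<in>set xs. c y = 1 \<or> c y = -1) \<Longrightarrow> (prod_list (map c xs))\<^sup>2 = (1::real)"
  by (induction xs) (auto simp: power_mult_distrib)

context qc
begin

definition Acc :: "nat set" where "Acc = (\<lambda>j. 2 * j) ` {0..<M}"

definition cc :: "bool list \<Rightarrow> nat \<Rightarrow> real" where
  "cc x i = (if x ! i then -1 else 1)"

lemma ph_k:
  assumes b: "\<beta> \<in> BB"
  shows "ph x \<beta> k = prod_list (map (cc x) (qs (fst \<beta>) (snd \<beta>)))"
proof -
  have l: "length (qs (fst \<beta>) (snd \<beta>)) \<le> k" unfolding qs_def by simp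
  have "ph x \<beta> k = (\<Prod>t<k. if t < length (qs (fst \<beta>) (snd \<beta>)) then cc x (qs (fst \<beta>) (snd \<beta>) ! t) else 1)"
    unfolding ph_def by (rule prod.cong) (auto simp: ph1_def cc_def pos_decode[OF b])
  then show ?thesis using prod_pad[OF l] by simp
qed

lemma ph_k_sq: "\<beta> \<in> BB \<Longrightarrow> (ph x \<beta> k)\<^sup>2 = 1"
  unfolding ph_k by (rule prod_list_pm1) (auto simp: cc_def)

lemma ph_k_prod:
  assumes j: "j < M" and a: "a (e j) \<noteq> 0"
  shows "ph x (j, False) k * ph x (j, True) k = chi (e j) x"
proof -
  have bF: "(j, False) \<in> BB" and bT: "(j, True) \<in> BB" using j unfolding BB_def by auto
  have fin: "finite (e j)" using e_fin[OF j] .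
  have c: "card (e j) \<le> 2 * k" using deg e_sub[OF j] a by auto
  have len: "length (lst j) \<le> 2 * k" unfolding lst_def using c fin by simp
  have qT: "qs j True = drop k (lst j)" unfolding qs_def using len by simp
  have qF: "qs j False = take k (lst j)" unfolding qs_def by simp
  have "ph x (j, False) k * ph x (j, True) k = prod_list (map (cc x) (take k (lst j))) * prod_list (map (cc x) (drop k (lst j)))"
    using ph_k[OF bF] ph_k[OF bT] qT qF by simp
  also have "\<dots> = prod_list (map (cc x) (lst j))"
    by (metis append_take_drop_id map_append prod_list.append)
  also have "\<dots> = (\<Prod>i\<in>e j. cc x i)"
    unfolding lst_def using prod.distinct_set_conv_list[of "sorted_list_of_set (e j)" "cc x"] fin by simp
  also have "\<dots> = chi (e j) x" unfolding chi_def cc_def by (intro prod.cong refl) (auto simp: bit_def)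
  finally show ?thesis .
qed

lemma Acc_sub: "Acc \<inter> {0..<qdim n mm} = Acc"
proof -
  have "2 * j < qdim n mm" if "j < M" for j
  proof -
    have "qidx mm 0 False (2 * j) < qdim n mm" by (rule qidx_lt) (use n1 that in \<open>auto simp: mm_def\<close>)
    then show ?thesis by (simp add: qidx_def)
  qed
  then show ?thesis unfolding Acc_def by auto
qed

lemma svec_pos:
  assumes b: "\<beta> \<in> BB"
  shows "svec x k $ pos \<beta> k = complex_of_real (gam \<beta> * ph x \<beta> k)"
proof -
  have "amp x k (pos \<beta> k) = gam \<beta> * ph x \<beta> k"
    unfolding amp_def using dsum_at[OF finBB pos_inj[OF order_refl] b, of "\<lambda>\<beta>'. gam \<beta>' * ph x \<beta>' k"] by simp
  then show ?thesis using pos_lt[OF b, of k] unfolding svec_def by simp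
qed

lemma psi_j:
  assumes j: "j < M"
  shows "(wmat n mm *\<^sub>v svec x k) $ (2 * j) =
    complex_of_real ((gam (j, False) * ph x (j, False) k + gam (j, True) * ph x (j, True) k) / sqrt 2)"
proof -
  have z: "2 * j < mm" using j unfolding mm_def by simp
  have r: "qidx mm 0 False (2 * j) = 2 * j" by (simp add: qidx_def)
  have rl: "2 * j < qdim n mm" using qidx_lt[of 0 n "2 * j" mm False] n1 z r by simp
  have bF: "(j, False) \<in> BB" and bT: "(j, True) \<in> BB" using j unfolding BB_def by auto
  have sc: "svec x k \<in> carrier_vec (qdim n mm)" using svec_carrier qd by simp
  have "(wmat n mm *\<^sub>v svec x k) $ (2 * j) = (svec x k $ qidx mm 0 False (2 * j) + svec x k $ qidx mm 0 True (2 * j)) / complex_of_real (sqrt 2)"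
    using wmat_vec[OF sc rl] qidx_decode[OF z, of 0 False] r by simp
  also have "\<dots> = complex_of_real ((gam (j, False) * ph x (j, False) k + gam (j, True) * ph x (j, True) k) / sqrt 2)"
    using svec_pos[OF bF] svec_pos[OF bT] unfolding pos_final by simp
  finally show ?thesis .
qed

lemma per_j:
  assumes j: "j < M"
  shows "((gam (j, False) * ph x (j, False) k + gam (j, True) * ph x (j, True) k) / sqrt 2)\<^sup>2
        = \<bar>a (e j)\<bar> / (2 * AA) + a (e j) * chi (e j) x / (2 * AA)"
proof (cases "a (e j) = 0")
  case True then show ?thesis unfolding gam_def by simp
next
  case False
  have bF: "(j, False) \<in> BB" and bT: "(j, True) \<in> BB" using j unfolding BB_def by auto
  define s where "s = sqrt (\<bar>a (e j)\<bar> / (2 * AA))"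
  define g where "g = sgn (a (e j))"
  define u where "u = ph x (j, False) k"
  define v where "v = ph x (j, True) k"
  have s2: "s\<^sup>2 = \<bar>a (e j)\<bar> / (2 * AA)" unfolding s_def using AA_pos by simp
  have g2: "g\<^sup>2 = 1" unfolding g_def using False by (auto simp: sgn_if)
  have u2: "u\<^sup>2 = 1" unfolding u_def by (rule ph_k_sq[OF bF])
  have v2: "v\<^sup>2 = 1" unfolding v_def by (rule ph_k_sq[OF bT])
  have uv: "u * v = chi (e j) x" unfolding u_def v_def by (rule ph_k_prod[OF j False])
  have ga: "\<bar>a (e j)\<bar> * g = a (e j)" unfolding g_def by (simp add: abs_mult_sgn)
  have sq2: "(sqrt 2)\<^sup>2 = (2::real)" by simp
  have e1: "gam (j, False) = s" "gam (j, True) = g * s" unfolding gam_def s_def g_def by simp_all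
  have "((gam (j, False) * u + gam (j, True) * v) / sqrt 2)\<^sup>2 = (s * (u + g * v))\<^sup>2 / 2"
    unfolding e1 by (simp add: power_divide algebra_simps)
  also have "\<dots> = s\<^sup>2 * (u\<^sup>2 + 2 * g * (u * v) + g\<^sup>2 * v\<^sup>2) / 2"
    by (simp add: power2_eq_square algebra_simps)
  also have "\<dots> = s\<^sup>2 + s\<^sup>2 * g * chi (e j) x" unfolding u2 v2 g2 uv by (simp add: algebra_simps)
  also have "\<dots> = \<bar>a (e j)\<bar> / (2 * AA) + (\<bar>a (e j)\<bar> * g) * chi (e j) x / (2 * AA)"
    unfolding s2 by simp
  finally show ?thesis unfolding u_def v_def ga .
qed

lemma accept_formula:
  "accept_prob n mm x Ulist Acc = 1/2 + (\<Sum>S\<in>Pow {0..<n}. a S * chi S x) / (2 * AA)"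
proof -
  have inj: "inj_on (\<lambda>j::nat. 2 * j) {0..<M}" by (rule inj_onI) simp
  have "accept_prob n mm x Ulist Acc = (\<Sum>r\<in>Acc. (cmod ((wmat n mm *\<^sub>v svec x k) $ r))\<^sup>2)"
    unfolding accept_prob_def Let_def qrun_Ulist[unfolded qd[symmetric]] Acc_sub qd[symmetric] ..
  also have "\<dots> = (\<Sum>j\<in>{0..<M}. (cmod ((wmat n mm *\<^sub>v svec x k) $ (2 * j)))\<^sup>2)"
    unfolding Acc_def by (rule sum.reindex[OF inj, unfolded comp_def])
  also have "\<dots> = (\<Sum>j\<in>{0..<M}. \<bar>a (e j)\<bar> / (2 * AA) + a (e j) * chi (e j) x / (2 * AA))"
  proof (intro sum.cong refl)
    fix j assume "j \<in> {0..<M}"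
    then have j: "j < M" by simp
    show "(cmod ((wmat n mm *\<^sub>v svec x k) $ (2 * j)))\<^sup>2 = \<bar>a (e j)\<bar> / (2 * AA) + a (e j) * chi (e j) x / (2 * AA)"
      unfolding psi_j[OF j] norm_of_real power2_abs per_j[OF j] ..
  qed
  also have "\<dots> = (\<Sum>S\<in>Pow {0..<n}. \<bar>a S\<bar>) / (2 * AA) + (\<Sum>S\<in>Pow {0..<n}. a S * chi S x) / (2 * AA)"
    using sum_M[of "\<lambda>S. \<bar>a S\<bar> / (2 * AA) + a S * chi S x / (2 * AA)"]
    by (simp add: atLeast0LessThan sum.distrib sum_divide_distrib)
  also have "(\<Sum>S\<in>Pow {0..<n}. \<bar>a S\<bar>) / (2 * AA) = 1/2" using AA_pos unfolding AA_def by simp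
  finally show ?thesis .
qed

end


lemma chi_empty: "chi {} x = 1" unfolding chi_def by simp

lemma mono_fourier:
  assumes T: "finite T"
  shows "(\<Prod>i\<in>T. bit (x ! i)) = (\<Sum>U\<in>Pow T. ((-1/2) ^ card U * (1/2) ^ card (T - U)) * chi U x)"
proof -
  have "(\<Prod>i\<in>T. bit (x ! i)) = (\<Prod>i\<in>T. (-1/2) * (1 - 2 * bit (x ! i)) + 1/2)"
    by (intro prod.cong refl) (simp add: algebra_simps)
  also have "\<dots> = (\<Sum>U\<in>Pow T. (\<Prod>i\<in>U. (-1/2) * (1 - 2 * bit (x ! i))) * (\<Prod>i\<in>T - U. 1/2))"
    by (rule prod_add[OF T])
  also have "\<dots> = (\<Sum>U\<in>Pow T. ((-1/2) ^ card U * (1/2) ^ card (T - U)) * chi U x)"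
    unfolding chi_def by (intro sum.cong refl) (simp only: prod.distrib prod_constant mult_ac)
  finally show ?thesis .
qed

lemma poly_fourier:
  assumes "polyd n d g"
  shows "\<exists>a. (\<forall>S\<in>Pow {0..<n}. a S \<noteq> 0 \<longrightarrow> card S \<le> d) \<and> (\<forall>x\<in>cube n. g x = (\<Sum>S\<in>Pow {0..<n}. a S * chi S x))"
proof -
  obtain c where c: "mpoly_deg_le n c d" "\<forall>x\<in>cube n. g x = mpoly_eval n c x"
    using assms unfolding polyd_def by blast
  define PS where "PS = Pow {0..<n}"
  have finPS: "finite PS" unfolding PS_def by simp
  have finT: "T \<in> PS \<Longrightarrow> finite T" for T unfolding PS_def by (auto intro: finite_subset)
  define w where "w T U = ((-1/2::real) ^ card U * (1/2) ^ card (T - U))" for T U :: "nat set"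
  define a where "a U = (\<Sum>T\<in>{T\<in>PS. U \<subseteq> T}. c T * w T U)" for U
  show ?thesis
  proof (intro exI[of _ a] conjI ballI impI)
    fix S assume S: "S \<in> Pow {0..<n}" "a S \<noteq> 0"
    then obtain T where T: "T \<in> PS" "S \<subseteq> T" "c T * w T S \<noteq> 0"
      unfolding a_def using sum.neutral by (smt (verit, del_insts) mem_Collect_eq)
    then have "card T \<le> d" using c(1) unfolding mpoly_deg_le_def PS_def by auto
    moreover have "card S \<le> card T" using T finT by (simp add: card_mono)
    ultimately show "card S \<le> d" by simp
  next
    fix x assume x: "x \<in> cube n"
    have pw: "T \<in> PS \<Longrightarrow> Pow T = {U \<in> PS. U \<subseteq> T}" for T unfolding PS_def by auto
    have "g x = (\<Sum>T\<in>PS. c T * (\<Prod>i\<in>T. bit (x ! i)))" using c(2) x unfolding mpoly_eval_def PS_def by simp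
    also have "\<dots> = (\<Sum>T\<in>PS. \<Sum>U\<in>{U\<in>PS. U \<subseteq> T}. c T * w T U * chi U x)"
      by (intro sum.cong refl) (simp add: mono_fourier finT pw sum_distrib_left w_def mult.assoc)
    also have "\<dots> = (\<Sum>U\<in>PS. \<Sum>T\<in>{T\<in>PS. U \<subseteq> T}. c T * w T U * chi U x)"
      by (rule sum.swap_restrict[OF finPS finPS])
    also have "\<dots> = (\<Sum>U\<in>PS. a U * chi U x)"
      unfolding a_def by (simp add: sum_distrib_right)
    finally show "g x = (\<Sum>S\<in>Pow {0..<n}. a S * chi S x)" unfolding PS_def .
  qed
qed

lemma ceil_half: "\<lceil>real d / 2\<rceil> = int ((d + 1) div 2)"
proof (rule ceiling_unique)
  show "real_of_int (int ((d + 1) div 2)) - 1 < real d / 2"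
    by (cases "even d") (auto elim!: evenE oddE simp: field_simps)
  show "real d / 2 \<le> real_of_int (int ((d + 1) div 2))"
    by (cases "even d") (auto elim!: evenE oddE simp: field_simps)
qed

lemma quantum_const:
  assumes n: "n \<ge> 1" and b: "\<forall>x\<in>X. f x = b"
  shows "quantum_alg_computes n X f 0 1 [1\<^sub>m (qdim n 1)] (if b then {0} else {})"
proof -
  have un: "\<forall>U\<in>set [1\<^sub>m (qdim n 1)]. unitary (qdim n 1) U" by (simp add: unitary_one)
  have N: "qdim n 1 > 0" using n unfolding qdim_def by simp
  have ap: "accept_prob n 1 x [1\<^sub>m (qdim n 1)] (if b then {0} else {}) = (if b then 1 else 0)" for x
    unfolding accept_prob_def Let_def using N by auto
  show ?thesis unfolding quantum_alg_computes_def using un ap b by auto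
qed

lemma poly_to_quantum:
  assumes up: "unbounded_poly n X f c" and dg: "mpoly_deg_le n c d" and Xne: "X \<noteq> {}" and Xc: "X \<subseteq> cube n"
    and n: "n \<ge> 1" and k: "k \<ge> 1" and dk: "d \<le> 2 * k"
  shows "\<exists>m Us Acc. quantum_alg_computes n X f k m Us Acc"
proof -
  have pq: "polyd n d (\<lambda>x. mpoly_eval n c x)" unfolding polyd_def using dg by blast
  have "polyd n d (\<lambda>x. mpoly_eval n c x + (- 1/2))"
    by (rule polyd_add[OF pq polyd_mono[OF polyd_const]]) simp
  then obtain a where a: "\<forall>S\<in>Pow {0..<n}. a S \<noteq> 0 \<longrightarrow> card S \<le> d"
      "\<forall>x\<in>cube n. mpoly_eval n c x + (- 1/2) = (\<Sum>S\<in>Pow {0..<n}. a S * chi S x)"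
    using poly_fourier by blast
  define p where "p x = (\<Sum>S\<in>Pow {0..<n}. a S * chi S x)" for x
  have pX: "x \<in> X \<Longrightarrow> (f x \<longrightarrow> p x > 0) \<and> (\<not> f x \<longrightarrow> p x < 0)" for x
    using up a(2) Xc unfolding unbounded_poly_def p_def by force
  have Apos: "(\<Sum>S\<in>Pow {0..<n}. \<bar>a S\<bar>) > 0"
  proof (rule ccontr)
    assume "\<not> ?thesis"
    then have "(\<Sum>S\<in>Pow {0..<n}. \<bar>a S\<bar>) = 0" by (metis abs_ge_zero order_less_le sum_nonneg)
    then have "\<forall>S\<in>Pow {0..<n}. \<bar>a S\<bar> = 0" using sum_nonneg_eq_0_iff[of "Pow {0..<n}" "\<lambda>S. \<bar>a S\<bar>"] by simp
    then have "p x = 0" for x unfolding p_def by simp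
    moreover obtain x where "x \<in> X" using Xne by blast
    ultimately show False using pX by force
  qed
  obtain e where e: "bij_betw e {0..<card (Pow {0..<n::nat})} (Pow {0..<n})"
    using ex_bij_betw_nat_finite[of "Pow {0..<n}"] by auto
  interpret Q: qc n k a e "card (Pow {0..<n::nat})"
    by unfold_locales (use n k e a(1) dk Apos in auto)
  have "quantum_alg_computes n X f k Q.mm Q.Ulist Q.Acc"
    unfolding quantum_alg_computes_def
  proof (intro conjI)
    show "1 \<le> Q.mm" by (rule Q.mm1)
    show "length Q.Ulist = k + 1" by (rule Q.Ulist_len)
    show "\<forall>U\<in>set Q.Ulist. unitary (qdim n Q.mm) U" by (rule Q.Ulist_unitary)
    show "\<forall>x\<in>X. (f x \<longrightarrow> 1/2 < accept_prob n Q.mm x Q.Ulist Q.Acc) \<and> (\<not> f x \<longrightarrow> 1/2 < 1 - accept_prob n Q.mm x Q.Ulist Q.Acc)"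
    proof (intro ballI conjI impI)
      fix x assume x: "x \<in> X" "f x"
      have "p x / (2 * Q.AA) > 0" using pX[OF x(1)] x(2) Q.AA_pos by simp
      then show "1/2 < accept_prob n Q.mm x Q.Ulist Q.Acc" unfolding Q.accept_formula p_def by simp
    next
      fix x assume x: "x \<in> X" "\<not> f x"
      have "p x / (2 * Q.AA) < 0" using pX[OF x(1)] x(2) Q.AA_pos by (simp add: divide_neg_pos)
      then show "1/2 < 1 - accept_prob n Q.mm x Q.Ulist Q.Acc" unfolding Q.accept_formula p_def by simp
    qed
  qed
  then show ?thesis by blast
qed

lemma deg0_const:
  assumes "mpoly_deg_le n c 0"
  shows "mpoly_eval n c x = c {}"
proof -
  have "mpoly_eval n c x = (\<Sum>S\<in>Pow {0..<n}. (if S = {} then c {} else 0) * (\<Prod>i\<in>S. bit (x ! i)))"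
    unfolding mpoly_eval_def
  proof (intro sum.cong refl)
    fix S assume S: "S \<in> Pow {0..<n}"
    then have fS: "finite S" by (auto intro: finite_subset)
    show "c S * (\<Prod>i\<in>S. bit (x ! i)) = (if S = {} then c {} else 0) * (\<Prod>i\<in>S. bit (x ! i))"
    proof (cases "S = {}")
      case False
      then have "c S = 0" using assms S fS unfolding mpoly_deg_le_def by auto
      then show ?thesis using False by simp
    qed simp
  qed
  also have "\<dots> = c {}" by (subst sum_single) auto
  finally show ?thesis .
qed

theorem theorem2:
  fixes n :: nat and X :: "bool list set" and f :: "bool list \<Rightarrow> bool"
  assumes "n \<ge> 1" and "X \<subseteq> cube n"
  shows "real (UQ n X f) = of_int \<lceil>real (UC n X f) / 2\<rceil> \<and>
         real (UQ n X f) = of_int \<lceil>real (udeg n X f) / 2\<rceil>"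
proof -
  note n = assms(1) and Xc = assms(2)
  have key: "UC n X f = udeg n X f \<and> UQ n X f = (udeg n X f + 1) div 2"
  proof (cases "X = {}")
    case True
    have "quantum_alg_computes n X f 0 1 [1\<^sub>m (qdim n 1)] (if True then {0} else {})"
      by (rule quantum_const[OF n]) (use True in simp)
    then have q: "UQ n X f = 0" unfolding UQ_def by (intro Least_eq_0) blast
    have "rand_alg_computes n X f 0 (return_pmf (Leaf True))"
      unfolding rand_alg_computes_def using True by simp
    then have cl: "UC n X f = 0" unfolding UC_def by (intro Least_eq_0) blast
    define c0 where "c0 S = (if S = {} then 1/2 else 0::real)" for S :: "nat set"
    have ev: "mpoly_eval n c0 x = 1/2" for x unfolding mpoly_eval_def c0_def by (subst sum_single) auto
    have u1: "unbounded_poly n X f c0" unfolding unbounded_poly_def using True by (simp add: ev)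
    have u2: "mpoly_deg_le n c0 0" unfolding mpoly_deg_le_def c0_def by auto
    have "unbounded_poly n X f c0 \<and> mpoly_deg_le n c0 0" using u1 u2 by blast
    then have u: "udeg n X f = 0" unfolding udeg_def by (intro Least_eq_0) blast
    show ?thesis using q cl u by simp
  next
    case False
    define C where "C = UC n X f"
    define D where "D = udeg n X f"
    define Q where "Q = UQ n X f"
    have exC: "\<exists>P. rand_alg_computes n X f C P"
      unfolding C_def UC_def by (rule LeastI_ex) (use classical_exists[OF Xc] in blast)
    then obtain P where P: "rand_alg_computes n X f C P" by blast
    have exDC: "\<exists>c. unbounded_poly n X f c \<and> mpoly_deg_le n c C" by (rule classical_to_poly[OF P Xc])
    have DC: "D \<le> C" unfolding D_def udeg_def by (rule Least_le) (rule exDC)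
    have exD: "\<exists>c. unbounded_poly n X f c \<and> mpoly_deg_le n c D"
      unfolding D_def udeg_def by (rule LeastI_ex) (use exDC in blast)
    then obtain c where c: "unbounded_poly n X f c" "mpoly_deg_le n c D" by blast
    have exCD: "\<exists>P. rand_alg_computes n X f D P" by (rule poly_to_classical[OF c False Xc])
    have CD: "C \<le> D" unfolding C_def UC_def by (rule Least_le) (rule exCD)
    define k where "k = (D + 1) div 2"
    have exk: "\<exists>m Us Acc. quantum_alg_computes n X f k m Us Acc"
    proof (cases "k = 0")
      case True
      then have D0: "D = 0" unfolding k_def by simp
      define b where "b = (c {} > 1/2)"
      have fb: "\<forall>x\<in>X. f x = b"
      proof
        fix x assume x: "x \<in> X"
        have ev: "mpoly_eval n c x = c {}" using deg0_const c(2) D0 by simp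
        show "f x = b" using c(1) x ev unfolding unbounded_poly_def b_def by auto
      qed
      show ?thesis using quantum_const[OF n fb] True by blast
    next
      case False
      then have k1: "k \<ge> 1" by simp
      have dk: "D \<le> 2 * k" unfolding k_def by simp
      show ?thesis by (rule poly_to_quantum[OF c(1) c(2) \<open>X \<noteq> {}\<close> Xc n k1 dk])
    qed
    have Qk: "Q \<le> k" unfolding Q_def UQ_def by (rule Least_le) (rule exk)
    have exQ: "\<exists>m Us Acc. quantum_alg_computes n X f Q m Us Acc"
      unfolding Q_def UQ_def by (rule LeastI_ex) (use exk in blast)
    then obtain m Us Acc where qa: "quantum_alg_computes n X f Q m Us Acc" by blast
    have exDQ: "\<exists>c. unbounded_poly n X f c \<and> mpoly_deg_le n c (2 * Q)" by (rule quantum_to_poly[OF qa Xc n])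
    have DQ: "D \<le> 2 * Q" unfolding D_def udeg_def by (rule Least_le) (rule exDQ)
    have "Q = k" using Qk DQ unfolding k_def by presburger
    then show ?thesis using DC CD unfolding C_def D_def Q_def k_def by simp
  qed
  then show ?thesis using ceil_half by simp
qed


end
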